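(* There exists a real-time 1-blind-counter Büchi automaton $\mathcal{A}_1$ such that the $\omega$-language $\mathrm{L}(\mathcal{A}_1)$ is $\mathbf{\Sigma}^1_1$-complete, hence non-Borel.
   Context: A real-time 1-blind-counter Büchi automaton is a finite-state automaton $(K,\Sigma,\Delta,q_0,F)$ reading one letter per step, whose transitions add $-1$, $0$ or $+1$ to one non-negative integer counter (a run blocks if the counter would become negative) but can never test whether the counter is zero; runs start in $q_0$ with counter $0$, and an $\omega$-word is accepted if some run visits $F$ infinitely often. A set $F\subseteq\Sigma^\omega$ (Cantor topology) is $\mathbf{\Sigma}^1_1$-complete if for every finite $Y$ and $E\subseteq Y^\omega$: $E$ is analytic iff $E=f^{-1}(F)$ for some continuous $f$. *)

theory Defs
  imports "HOL-Analysis.Analysis"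
begin

definition cantor_top :: "nat set \<Rightarrow> (nat \<Rightarrow> nat) topology" where
  "cantor_top Y = product_topology (\<lambda>_. discrete_topology Y) UNIV"

definition baire_top :: "(nat \<Rightarrow> nat) topology" where
  "baire_top = product_topology (\<lambda>_. discrete_topology UNIV) UNIV"

definition analytic_set :: "nat set \<Rightarrow> (nat \<Rightarrow> nat) set \<Rightarrow> bool" where
  "analytic_set Y E \<longleftrightarrow>
     (\<exists>C. closedin (prod_topology (cantor_top Y) baire_top) C \<and> E = fst ` C)"

definition borel_in :: "'a topology \<Rightarrow> 'a set \<Rightarrow> bool" where
  "borel_in X B \<longleftrightarrow> B \<in> sigma_sets (topspace X) {U. openin X U}"

definition sigma11_complete :: "nat set \<Rightarrow> (nat \<Rightarrow> nat) set \<Rightarrow> bool" where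
  "sigma11_complete \<Sigma> F \<longleftrightarrow>
     F \<subseteq> topspace (cantor_top \<Sigma>) \<and>
     (\<forall>Y E. finite Y \<longrightarrow> E \<subseteq> topspace (cantor_top Y) \<longrightarrow>
        (analytic_set Y E \<longleftrightarrow>
          (\<exists>f. continuous_map (cantor_top Y) (cantor_top \<Sigma>) f \<and>
               E = {y \<in> topspace (cantor_top Y). f y \<in> F})))"

text \<open>A transition (p, a, d, q) reads letter a, goes from p to q and
  adds d \<in> {-1,0,1} to the counter.\<close>
record bcba =
  states :: "nat set"
  alph   :: "nat set"
  trans  :: "(nat \<times> nat \<times> int \<times> nat) set"
  init   :: nat
  final  :: "nat set"

definition wf_bcba :: "bcba \<Rightarrow> bool" where
  "wf_bcba A \<longleftrightarrow> finite (states A) \<and> finite (alph A) \<and> init A \<in> states A \<and>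
     final A \<subseteq> states A \<and>
     trans A \<subseteq> states A \<times> alph A \<times> {-1, 0, 1} \<times> states A"

text \<open>A run on x: state sequence q and (non-negative) counter sequence c; the counter is
  natural-valued, so a run blocks when it would become negative. No zero tests.\<close>
definition is_run :: "bcba \<Rightarrow> (nat \<Rightarrow> nat) \<Rightarrow> (nat \<Rightarrow> nat) \<Rightarrow> (nat \<Rightarrow> nat) \<Rightarrow> bool" where
  "is_run A x q c \<longleftrightarrow> q 0 = init A \<and> c 0 = 0 \<and>
     (\<forall>i. \<exists>d. (q i, x i, d, q (Suc i)) \<in> trans A \<and> int (c (Suc i)) = int (c i) + d)"

definition omega_lang :: "bcba \<Rightarrow> (nat \<Rightarrow> nat) set" where
  "omega_lang A = {x. (\<forall>n. x n \<in> alph A) \<and>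
     (\<exists>q c. is_run A x q c \<and> infinite {i. q i \<in> final A})}"

end

theory Submission
  imports Defs
begin

abbreviation dprod :: "nat set \<Rightarrow> (nat \<Rightarrow> nat) topology" where
  "dprod S \<equiv> product_topology (\<lambda>_. discrete_topology S) UNIV"

lemma cantor_dprod: "cantor_top Y = dprod Y"
  by (simp add: cantor_top_def)

lemma baire_dprod: "baire_top = dprod UNIV"
  by (simp add: baire_top_def)

lemma topspace_dprod: "topspace (dprod S) = {x. \<forall>n. x n \<in> S}"
  by (auto simp: PiE_def Pi_def)

declare topspace_product_topology[simp del]
declare topspace_dprod[simp]

definition agree :: "nat \<Rightarrow> (nat \<Rightarrow> nat) \<Rightarrow> (nat \<Rightarrow> nat) \<Rightarrow> bool" where
  "agree n x y \<longleftrightarrow> (\<forall>i<n. x i = y i)"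

lemma agree_sym: "agree n x y \<longleftrightarrow> agree n y x"
  by (auto simp: agree_def)

lemma agree_mono: "agree n x y \<Longrightarrow> m \<le> n \<Longrightarrow> agree m x y"
  by (auto simp: agree_def)

lemma openin_cyl: "openin (dprod S) {x \<in> topspace (dprod S). agree n x y}"
proof -
  define X where "X = (\<lambda>i. if i < n then {y i} \<inter> S else S)"
  have "openin (dprod S) (\<Pi>\<^sub>E i\<in>UNIV. X i)"
    apply (rule product_topology_basis)
    by (auto simp: X_def)
  moreover have "(\<Pi>\<^sub>E i\<in>UNIV. X i) = {x \<in> topspace (dprod S). agree n x y}"
    by (auto simp: X_def agree_def topspace_dprod PiE_def Pi_def split: if_splits)
  ultimately show ?thesis by simp
qed

lemma openin_dprod_cyl:
  assumes "openin (dprod S) U" "x \<in> U"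
  shows "\<exists>n. {x' \<in> topspace (dprod S). agree n x' x} \<subseteq> U"
proof -
  obtain X where X: "x \<in> (\<Pi>\<^sub>E i\<in>UNIV. X i)" "\<forall>i. openin (discrete_topology S) (X i)"
     "finite {i. X i \<noteq> topspace (discrete_topology S)}" "(\<Pi>\<^sub>E i\<in>UNIV. X i) \<subseteq> U"
    using product_topology_open_contains_basis[OF assms] by blast
  define n where "n = Suc (Max ({0} \<union> {i. X i \<noteq> S}))"
  have lt: "i < n" if "X i \<noteq> S" for i
  proof -
    have "i \<le> Max ({0} \<union> {i. X i \<noteq> S})"
      using X(3) that by (intro Max_ge) auto
    then show ?thesis by (simp add: n_def)
  qed
  have "{x' \<in> topspace (dprod S). agree n x' x} \<subseteq> (\<Pi>\<^sub>E i\<in>UNIV. X i)"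
  proof
    fix x' assume x': "x' \<in> {x' \<in> topspace (dprod S). agree n x' x}"
    have "x' i \<in> X i" for i
    proof (cases "X i = S")
      case True then show ?thesis using x' by (simp add: topspace_dprod)
    next
      case False then have "i < n" by (rule lt)
      then have "x' i = x i" using x' by (simp add: agree_def)
      then show ?thesis using X(1) by (simp add: PiE_iff)
    qed
    then show "x' \<in> (\<Pi>\<^sub>E i\<in>UNIV. X i)" by (simp add: PiE_iff)
  qed
  then show ?thesis using X(4) by blast
qed

lemma openin_dprod_iff:
  "openin (dprod S) U \<longleftrightarrow> U \<subseteq> topspace (dprod S) \<and>
     (\<forall>x\<in>U. \<exists>n. {x' \<in> topspace (dprod S). agree n x' x} \<subseteq> U)"
proof
  assume "openin (dprod S) U"
  then show "U \<subseteq> topspace (dprod S) \<and> (\<forall>x\<in>U. \<exists>n. {x' \<in> topspace (dprod S). agree n x' x} \<subseteq> U)"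
    using openin_dprod_cyl[of S U] openin_subset[of "dprod S" U] by simp
next
  assume H: "U \<subseteq> topspace (dprod S) \<and> (\<forall>x\<in>U. \<exists>n. {x' \<in> topspace (dprod S). agree n x' x} \<subseteq> U)"
  show "openin (dprod S) U"
  proof (subst openin_subopen, intro ballI)
    fix x assume "x \<in> U"
    then obtain n where n: "{x' \<in> topspace (dprod S). agree n x' x} \<subseteq> U" using H by blast
    moreover have "x \<in> topspace (dprod S)" using \<open>x \<in> U\<close> H by blast
    then have "x \<in> {x' \<in> topspace (dprod S). agree n x' x}"
      by (simp add: agree_def)
    ultimately show "\<exists>T. openin (dprod S) T \<and> x \<in> T \<and> T \<subseteq> U"
      using openin_cyl[of S n x] by blast
  qed
qed

lemma closedin_dprod2_iff:
  "closedin (prod_topology (dprod S) (dprod S')) C \<longleftrightarrow>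
    C \<subseteq> topspace (dprod S) \<times> topspace (dprod S') \<and>
    (\<forall>y z. y \<in> topspace (dprod S) \<longrightarrow> z \<in> topspace (dprod S') \<longrightarrow>
       (\<forall>n. \<exists>y' z'. (y', z') \<in> C \<and> agree n y' y \<and> agree n z' z) \<longrightarrow> (y, z) \<in> C)"
  (is "?L \<longleftrightarrow> ?R")
proof
  assume L: ?L
  then have sub: "C \<subseteq> topspace (dprod S) \<times> topspace (dprod S')"
    using closedin_subset[OF L] topspace_prod_topology[of "dprod S" "dprod S'"] by simp
  have op: "openin (prod_topology (dprod S) (dprod S')) (topspace (dprod S) \<times> topspace (dprod S') - C)"
    using L by (simp add: closedin_def)
  show ?R
  proof (intro conjI sub allI impI)
    fix y z
    assume y: "y \<in> topspace (dprod S)" and z: "z \<in> topspace (dprod S')"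
      and ap: "\<forall>n. \<exists>y' z'. (y', z') \<in> C \<and> agree n y' y \<and> agree n z' z"
    show "(y, z) \<in> C"
    proof (rule ccontr)
      assume "(y, z) \<notin> C"
      then have "(y, z) \<in> topspace (dprod S) \<times> topspace (dprod S') - C" using y z by simp
      then have "\<exists>U V. openin (dprod S) U \<and> openin (dprod S') V \<and> y \<in> U \<and> z \<in> V \<and>
        U \<times> V \<subseteq> topspace (dprod S) \<times> topspace (dprod S') - C"
        by (rule op[unfolded openin_prod_topology_alt, rule_format])
      then obtain U V where UV: "openin (dprod S) U" "openin (dprod S') V" "y \<in> U" "z \<in> V"
        "U \<times> V \<subseteq> topspace (dprod S) \<times> topspace (dprod S') - C"
        by blast
      obtain n1 where n1: "{x' \<in> topspace (dprod S). agree n1 x' y} \<subseteq> U"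
        using openin_dprod_cyl[OF UV(1) UV(3)] by blast
      obtain n2 where n2: "{x' \<in> topspace (dprod S'). agree n2 x' z} \<subseteq> V"
        using openin_dprod_cyl[OF UV(2) UV(4)] by blast
      obtain y' z' where yz: "(y', z') \<in> C" "agree (max n1 n2) y' y" "agree (max n1 n2) z' z"
        using ap by blast
      have "agree n1 y' y" using yz(2) agree_mono by (metis max.cobounded1)
      moreover have "y' \<in> topspace (dprod S)" using sub yz(1) by blast
      ultimately have "y' \<in> U" using n1 by blast
      moreover have "agree n2 z' z" using yz(3) agree_mono by (metis max.cobounded2)
      moreover have "z' \<in> topspace (dprod S')" using sub yz(1) by blast
      ultimately have "z' \<in> V" using n2 by blast
      with \<open>y' \<in> U\<close> show False using UV(5) yz(1) by blast
    qed
  qed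
next
  assume R: ?R
  show ?L
    unfolding closedin_def
  proof (intro conjI)
    show "C \<subseteq> topspace (prod_topology (dprod S) (dprod S'))"
      using R by simp
    show "openin (prod_topology (dprod S) (dprod S')) (topspace (prod_topology (dprod S) (dprod S')) - C)"
      unfolding openin_prod_topology_alt
    proof (intro allI impI)
      fix y z
      assume yz: "(y, z) \<in> topspace (prod_topology (dprod S) (dprod S')) - C"
      then have y: "y \<in> topspace (dprod S)" and z: "z \<in> topspace (dprod S')" and nC: "(y,z) \<notin> C"
        by auto
      have "\<not> (\<forall>n. \<exists>y' z'. (y', z') \<in> C \<and> agree n y' y \<and> agree n z' z)"
        using R y z nC by blast
      then obtain n where n: "\<not> (\<exists>y' z'. (y', z') \<in> C \<and> agree n y' y \<and> agree n z' z)"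
        by blast
      let ?U = "{x' \<in> topspace (dprod S). agree n x' y}"
      let ?V = "{x' \<in> topspace (dprod S'). agree n x' z}"
      have "?U \<times> ?V \<subseteq> topspace (prod_topology (dprod S) (dprod S')) - C"
      proof
        fix p assume p: "p \<in> ?U \<times> ?V"
        obtain a b where ab: "p = (a, b)" by fastforce
        have "(a, b) \<notin> C" using n p ab by (auto simp: agree_sym)
        then show "p \<in> topspace (prod_topology (dprod S) (dprod S')) - C"
          using p ab by simp
      qed
      moreover have "y \<in> ?U" "z \<in> ?V" using y z by (auto simp: agree_def)
      ultimately show "\<exists>U V. openin (dprod S) U \<and> openin (dprod S') V \<and> y \<in> U \<and> z \<in> V \<and>
            U \<times> V \<subseteq> topspace (prod_topology (dprod S) (dprod S')) - C"
        using openin_cyl[of S n y] openin_cyl[of S' n z] by (intro exI conjI)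
    qed
  qed
qed

lemma continuous_map_dprodI:
  assumes "\<And>x n. x \<in> topspace (dprod S) \<Longrightarrow> f x n \<in> S'"
    and "\<And>x n. x \<in> topspace (dprod S) \<Longrightarrow> \<exists>m. \<forall>x'\<in>topspace (dprod S). agree m x' x \<longrightarrow> f x' n = f x n"
  shows "continuous_map (dprod S) (dprod S') f"
  unfolding continuous_map_componentwise_UNIV
proof
  fix k
  show "continuous_map (dprod S) (discrete_topology S') (\<lambda>x. f x k)"
    unfolding continuous_map_def
  proof (intro conjI allI impI)
    show "(\<lambda>x. f x k) \<in> topspace (dprod S) \<rightarrow> topspace (discrete_topology S')"
      using assms(1) by auto
    fix U assume "openin (discrete_topology S') U"
    show "openin (dprod S) {x \<in> topspace (dprod S). f x k \<in> U}"
      unfolding openin_dprod_iff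
    proof (intro conjI ballI)
      fix x assume x: "x \<in> {x \<in> topspace (dprod S). f x k \<in> U}"
      then obtain m where m: "\<forall>x'\<in>topspace (dprod S). agree m x' x \<longrightarrow> f x' k = f x k"
        using assms(2) by blast
      show "\<exists>n. {x' \<in> topspace (dprod S). agree n x' x} \<subseteq> {x \<in> topspace (dprod S). f x k \<in> U}"
        using m x by (intro exI[of _ m]) auto
    qed auto
  qed
qed


abbreviation B2 where "B2 S \<equiv> prod_topology (dprod S) (dprod UNIV)"

lemma analytic_set_iff:
  "analytic_set Y E \<longleftrightarrow> (\<exists>C. closedin (B2 Y) C \<and> E = fst ` C)"
  by (simp add: analytic_set_def cantor_dprod baire_dprod)

lemma closedin_B2_iff:
  "closedin (B2 S) C \<longleftrightarrow>
    C \<subseteq> topspace (dprod S) \<times> UNIV \<and>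
    (\<forall>y z. y \<in> topspace (dprod S) \<longrightarrow>
       (\<forall>n. \<exists>y' z'. (y', z') \<in> C \<and> agree n y' y \<and> agree n z' z) \<longrightarrow> (y, z) \<in> C)"
  using closedin_dprod2_iff[of S UNIV C] by simp

lemma closedin_dprod_iff:
  "closedin (dprod S) K \<longleftrightarrow> K \<subseteq> topspace (dprod S) \<and>
     (\<forall>y\<in>topspace (dprod S). (\<forall>n. \<exists>y'\<in>K. agree n y' y) \<longrightarrow> y \<in> K)"
proof
  assume L: "closedin (dprod S) K"
  then have sub: "K \<subseteq> topspace (dprod S)" by (rule closedin_subset)
  have op: "openin (dprod S) (topspace (dprod S) - K)" using L by (simp add: closedin_def)
  show "K \<subseteq> topspace (dprod S) \<and>
     (\<forall>y\<in>topspace (dprod S). (\<forall>n. \<exists>y'\<in>K. agree n y' y) \<longrightarrow> y \<in> K)"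
  proof (intro conjI sub ballI impI)
    fix y assume y: "y \<in> topspace (dprod S)" and ap: "\<forall>n. \<exists>y'\<in>K. agree n y' y"
    show "y \<in> K"
    proof (rule ccontr)
      assume "y \<notin> K"
      then have "y \<in> topspace (dprod S) - K" using y by simp
      then obtain n where n: "{x' \<in> topspace (dprod S). agree n x' y} \<subseteq> topspace (dprod S) - K"
        using openin_dprod_cyl[OF op] by blast
      obtain y' where "y' \<in> K" "agree n y' y" using ap by blast
      then show False using n sub by blast
    qed
  qed
next
  assume R: "K \<subseteq> topspace (dprod S) \<and>
     (\<forall>y\<in>topspace (dprod S). (\<forall>n. \<exists>y'\<in>K. agree n y' y) \<longrightarrow> y \<in> K)"
  show "closedin (dprod S) K"
    unfolding closedin_def
  proof (intro conjI)
    show "K \<subseteq> topspace (dprod S)" using R by blast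
    show "openin (dprod S) (topspace (dprod S) - K)"
      unfolding openin_dprod_iff
    proof (intro conjI ballI)
      fix y assume y: "y \<in> topspace (dprod S) - K"
      then have "\<not> (\<forall>n. \<exists>y'\<in>K. agree n y' y)" using R by blast
      then obtain n where n: "\<forall>y'\<in>K. \<not> agree n y' y" by blast
      show "\<exists>n. {x' \<in> topspace (dprod S). agree n x' y} \<subseteq> topspace (dprod S) - K"
        using n by (intro exI[of _ n]) blast
    qed blast
  qed
qed

lemma agree_map: "agree n y y' \<longleftrightarrow> map y [0..<n] = map y' [0..<n]"
  by (auto simp: agree_def)

subsection \<open>Closure properties of analytic sets\<close>

lemma analytic_closed:
  assumes "closedin (dprod Y) K"
  shows "analytic_set Y K"
proof -
  define C where "C = K \<times> {\<lambda>_::nat. 0::nat}"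
  have sub: "K \<subseteq> topspace (dprod Y)" using assms closedin_subset by blast
  have "closedin (B2 Y) C"
    unfolding closedin_B2_iff
  proof (intro conjI allI impI)
    show "C \<subseteq> topspace (dprod Y) \<times> UNIV" using sub by (auto simp: C_def)
    fix y z assume y: "y \<in> topspace (dprod Y)"
      and ap: "\<forall>n. \<exists>y' z'. (y', z') \<in> C \<and> agree n y' y \<and> agree n z' z"
    have "z = (\<lambda>_. 0)"
    proof
      fix i
      obtain y' z' where "(y', z') \<in> C" "agree (Suc i) z' z" using ap by blast
      then show "z i = 0" by (auto simp: C_def agree_def)
    qed
    moreover have "\<forall>n. \<exists>y'\<in>K. agree n y' y" using ap by (auto simp: C_def)
    then have "y \<in> K"
      using assms[unfolded closedin_dprod_iff] y by blast
    ultimately show "(y, z) \<in> C" by (simp add: C_def)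
  qed
  moreover have "K = fst ` C" by (force simp: C_def)
  ultimately show ?thesis unfolding analytic_set_iff by blast
qed

lemma analytic_open:
  assumes "openin (dprod Y) U"
  shows "analytic_set Y U"
proof -
  define C where "C = {(y, z::nat\<Rightarrow>nat). y \<in> topspace (dprod Y) \<and> {x' \<in> topspace (dprod Y). agree (z 0) x' y} \<subseteq> U}"
  have "closedin (B2 Y) C"
    unfolding closedin_B2_iff
  proof (intro conjI allI impI)
    show "C \<subseteq> topspace (dprod Y) \<times> UNIV" by (auto simp: C_def)
    fix y z assume y: "y \<in> topspace (dprod Y)"
      and ap: "\<forall>n. \<exists>y' z'. (y', z') \<in> C \<and> agree n y' y \<and> agree n z' z"
    obtain y' z' where yz: "(y', z') \<in> C" "agree (Suc (z 0)) y' y" "agree (Suc (z 0)) z' z"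
      using ap by blast
    have "z' 0 = z 0" using yz(3) by (simp add: agree_def)
    moreover have "agree (z 0) x y' \<longleftrightarrow> agree (z 0) x y" for x
      using yz(2) by (auto simp: agree_def)
    ultimately show "(y, z) \<in> C" using yz(1) y by (simp add: C_def)
  qed
  moreover have "U = fst ` C"
  proof
    show "fst ` C \<subseteq> U"
    proof
      fix y assume "y \<in> fst ` C"
      then obtain z where "(y, z) \<in> C" by force
      then show "y \<in> U" by (auto simp: C_def agree_def)
    qed
    show "U \<subseteq> fst ` C"
    proof
      fix y assume "y \<in> U"
      then obtain n where n: "{x' \<in> topspace (dprod Y). agree n x' y} \<subseteq> U"
        using openin_dprod_cyl[OF assms] by blast
      have "y \<in> topspace (dprod Y)" using \<open>y \<in> U\<close> openin_subset[OF assms] by blast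
      then have "(y, \<lambda>_. n) \<in> C" using n by (simp add: C_def)
      then show "y \<in> fst ` C" by force
    qed
  qed
  ultimately show ?thesis unfolding analytic_set_iff by blast
qed

lemma analytic_subset: "analytic_set Y E \<Longrightarrow> E \<subseteq> topspace (dprod Y)"
  unfolding analytic_set_iff closedin_B2_iff by force

lemma analytic_Union:
  assumes "\<And>i::nat. analytic_set Y (E i)"
  shows "analytic_set Y (\<Union>i. E i)"
proof -
  obtain C where C: "\<And>i. closedin (B2 Y) (C i)" "\<And>i. E i = fst ` C i"
    using assms unfolding analytic_set_iff by metis
  define D where "D = {(y, z). (y, \<lambda>k. z (Suc k)) \<in> C (z 0)}"
  have "closedin (B2 Y) D"
    unfolding closedin_B2_iff
  proof (intro conjI allI impI)
    show "D \<subseteq> topspace (dprod Y) \<times> UNIV"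
      using C(1) unfolding closedin_B2_iff by (force simp: D_def)
    fix y z assume y: "y \<in> topspace (dprod Y)"
      and ap: "\<forall>n. \<exists>y' z'. (y', z') \<in> D \<and> agree n y' y \<and> agree n z' z"
    have "\<forall>n. \<exists>y' z'. (y', z') \<in> C (z 0) \<and> agree n y' y \<and> agree n z' (\<lambda>k. z (Suc k))"
    proof
      fix n
      obtain y' z' where yz: "(y', z') \<in> D" "agree (Suc n) y' y" "agree (Suc n) z' z"
        using ap by blast
      have "z' 0 = z 0" using yz(3) by (simp add: agree_def)
      then have "(y', \<lambda>k. z' (Suc k)) \<in> C (z 0)" using yz(1) by (simp add: D_def)
      moreover have "agree n y' y" using yz(2) by (simp add: agree_def)
      moreover have "agree n (\<lambda>k. z' (Suc k)) (\<lambda>k. z (Suc k))" using yz(3) by (simp add: agree_def)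
      ultimately show "\<exists>y' z'. (y', z') \<in> C (z 0) \<and> agree n y' y \<and> agree n z' (\<lambda>k. z (Suc k))"
        by blast
    qed
    then have "(y, \<lambda>k. z (Suc k)) \<in> C (z 0)"
      using C(1)[of "z 0", unfolded closedin_B2_iff] y by blast
    then show "(y, z) \<in> D" by (simp add: D_def)
  qed
  moreover have "(\<Union>i. E i) = fst ` D"
  proof
    show "(\<Union>i. E i) \<subseteq> fst ` D"
    proof
      fix y assume "y \<in> (\<Union>i. E i)"
      then obtain i w where "(y, w) \<in> C i" using C(2) by force
      then have "(y, case_nat i w) \<in> D" by (simp add: D_def)
      then show "y \<in> fst ` D" by force
    qed
    show "fst ` D \<subseteq> (\<Union>i. E i)"
    proof
      fix y assume "y \<in> fst ` D"
      then obtain z where "(y, z) \<in> D" by force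
      then have "(y, \<lambda>k. z (Suc k)) \<in> C (z 0)" by (simp add: D_def)
      then show "y \<in> (\<Union>i. E i)" using C(2) by force
    qed
  qed
  ultimately show ?thesis unfolding analytic_set_iff by blast
qed

lemma prod_encode_bound: "\<exists>N. \<forall>k<n. prod_encode (i, k) < N"
proof (induction n)
  case 0 then show ?case by simp
next
  case (Suc n)
  then obtain N where "\<forall>k<n. prod_encode (i, k) < N" by blast
  then show ?case
    by (intro exI[of _ "max N (Suc (prod_encode (i, n)))"]) (auto simp: less_Suc_eq)
qed

lemma analytic_Inter:
  assumes "\<And>i::nat. analytic_set Y (E i)"
  shows "analytic_set Y (\<Inter>i. E i)"
proof -
  obtain C where C: "\<And>i. closedin (B2 Y) (C i)" "\<And>i. E i = fst ` C i"
    using assms unfolding analytic_set_iff by metis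
  define D where "D = {(y, z). y \<in> topspace (dprod Y) \<and> (\<forall>i. (y, \<lambda>k. z (prod_encode (i, k))) \<in> C i)}"
  have "closedin (B2 Y) D"
    unfolding closedin_B2_iff
  proof (intro conjI allI impI)
    show "D \<subseteq> topspace (dprod Y) \<times> UNIV" by (auto simp: D_def)
    fix y z assume y: "y \<in> topspace (dprod Y)"
      and ap: "\<forall>n. \<exists>y' z'. (y', z') \<in> D \<and> agree n y' y \<and> agree n z' z"
    have "(y, \<lambda>k. z (prod_encode (i, k))) \<in> C i" for i
    proof -
      have "\<forall>n. \<exists>y' z'. (y', z') \<in> C i \<and> agree n y' y \<and> agree n z' (\<lambda>k. z (prod_encode (i, k)))"
      proof
        fix n
        obtain N where N: "\<forall>k<n. prod_encode (i, k) < N" using prod_encode_bound by blast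
        obtain y' z' where yz: "(y', z') \<in> D" "agree (max n N) y' y" "agree (max n N) z' z"
          using ap by blast
        have "(y', \<lambda>k. z' (prod_encode (i, k))) \<in> C i" using yz(1) by (simp add: D_def)
        moreover have "agree n y' y" using yz(2) by (simp add: agree_def)
        moreover have "agree n (\<lambda>k. z' (prod_encode (i, k))) (\<lambda>k. z (prod_encode (i, k)))"
          using yz(3) N by (simp add: agree_def less_max_iff_disj)
        ultimately show "\<exists>y' z'. (y', z') \<in> C i \<and> agree n y' y \<and> agree n z' (\<lambda>k. z (prod_encode (i, k)))"
          by blast
      qed
      then show ?thesis using C(1)[of i, unfolded closedin_B2_iff] y by blast
    qed
    then show "(y, z) \<in> D" using y by (simp add: D_def)
  qed
  moreover have "(\<Inter>i. E i) = fst ` D"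
  proof
    show "(\<Inter>i. E i) \<subseteq> fst ` D"
    proof
      fix y assume y: "y \<in> (\<Inter>i. E i)"
      then have "\<forall>i. \<exists>w. (y, w) \<in> C i" using C(2) by force
      then obtain w where w: "\<And>i. (y, w i) \<in> C i" by metis
      define z where "z = (\<lambda>m. case prod_decode m of (i, k) \<Rightarrow> w i k)"
      have "(\<lambda>k. z (prod_encode (i, k))) = w i" for i by (simp add: z_def)
      moreover have "y \<in> topspace (dprod Y)"
        using w[of 0] C(1)[of 0, unfolded closedin_B2_iff] by blast
      ultimately have "(y, z) \<in> D" using w by (simp add: D_def)
      then show "y \<in> fst ` D" by force
    qed
    show "fst ` D \<subseteq> (\<Inter>i. E i)"
    proof
      fix y assume "y \<in> fst ` D"
      then obtain z where "(y, z) \<in> D" by force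
      then show "y \<in> (\<Inter>i. E i)" using C(2) by (force simp: D_def)
    qed
  qed
  ultimately show ?thesis unfolding analytic_set_iff by blast
qed

lemma borel_analytic_aux:
  assumes "B \<in> sigma_sets (topspace (dprod Y)) {U. openin (dprod Y) U}"
  shows "analytic_set Y B \<and> analytic_set Y (topspace (dprod Y) - B)"
  using assms
proof (induction rule: sigma_sets.induct)
  case (Basic a)
  then have o: "openin (dprod Y) a" by simp
  have "closedin (dprod Y) (topspace (dprod Y) - a)"
    by (rule closedin_diff[OF closedin_topspace o])
  then show ?case
    using analytic_open[OF o] analytic_closed by blast
next
  case Empty
  have "analytic_set Y (topspace (dprod Y))" by (rule analytic_closed[OF closedin_topspace])
  then show ?case using analytic_closed[OF closedin_empty] by simp
next
  case (Compl a)
  have "a \<subseteq> topspace (dprod Y)"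
    using sigma_sets_into_sp[OF _ Compl.hyps] openin_subset by blast
  then have "topspace (dprod Y) - (topspace (dprod Y) - a) = a" by blast
  then show ?case using Compl.IH by simp
next
  case (Union A)
  have "topspace (dprod Y) - \<Union> (range A) = (\<Inter>i. topspace (dprod Y) - A i)" by blast
  then show ?case using Union.IH analytic_Union[of Y A] analytic_Inter[of Y "\<lambda>i. topspace (dprod Y) - A i"]
    by simp
qed

lemma borel_analytic:
  assumes "borel_in (cantor_top Y) B"
  shows "analytic_set Y B"
  using assms borel_analytic_aux unfolding borel_in_def cantor_dprod by blast

lemma borel_preimage_aux:
  assumes f: "continuous_map X X' f"
    and "B \<in> sigma_sets (topspace X') {U. openin X' U}"
  shows "{x \<in> topspace X. f x \<in> B} \<in> sigma_sets (topspace X) {U. openin X U}"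
  using assms(2)
proof (induction rule: sigma_sets.induct)
  case (Basic a)
  then show ?case using openin_continuous_map_preimage[OF f] by (simp add: sigma_sets.Basic)
next
  case Empty
  show ?case by (simp add: sigma_sets.Empty)
next
  case (Compl a)
  have "{x \<in> topspace X. f x \<in> topspace X' - a} = topspace X - {x \<in> topspace X. f x \<in> a}"
    using f by (auto simp: continuous_map_def)
  then show ?case using Compl.IH by (simp add: sigma_sets.Compl)
next
  case (Union A)
  have "{x \<in> topspace X. f x \<in> \<Union> (range A)} = (\<Union>i. {x \<in> topspace X. f x \<in> A i})" by blast
  then show ?case using Union.IH by (simp add: sigma_sets.Union)
qed

lemma borel_preimage:
  assumes "continuous_map X X' f" "borel_in X' B"
  shows "borel_in X {x \<in> topspace X. f x \<in> B}"
  using assms borel_preimage_aux unfolding borel_in_def by blast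

lemma analytic_preimage:
  assumes f: "continuous_map (dprod Y) (dprod S) f" and F: "analytic_set S F"
  shows "analytic_set Y {y \<in> topspace (dprod Y). f y \<in> F}"
proof -
  obtain C where C: "closedin (B2 S) C" "F = fst ` C" using F unfolding analytic_set_iff by blast
  define g where "g = (\<lambda>p::(nat\<Rightarrow>nat)\<times>(nat\<Rightarrow>nat). (f (fst p), snd p))"
  have g: "continuous_map (B2 Y) (B2 S) g"
    unfolding g_def
    by (intro continuous_map_pairedI continuous_map_compose[OF continuous_map_fst f, unfolded o_def]
        continuous_map_snd)
  define D where "D = {p \<in> topspace (B2 Y). g p \<in> C}"
  have "closedin (B2 Y) D" unfolding D_def by (rule closedin_continuous_map_preimage[OF g C(1)])
  moreover have "{y \<in> topspace (dprod Y). f y \<in> F} = fst ` D"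
    using C(2) by (force simp: D_def g_def)
  ultimately show ?thesis unfolding analytic_set_iff by blast
qed

subsection \<open>A non-analytic complement\<close>

definition DG :: "(nat \<Rightarrow> nat) set" where
  "DG = {y. (\<forall>n. y n \<in> {0,1}) \<and> (\<exists>z::nat\<Rightarrow>nat. \<forall>n. y (to_nat (map y [0..<n], map z [0..<n])) = 1)}"

lemma DG_analytic: "analytic_set {0,1} DG"
proof -
  define C where "C = {(y, z::nat\<Rightarrow>nat). (\<forall>n. y n \<in> {0::nat,1}) \<and> (\<forall>n. y (to_nat (map y [0..<n], map z [0..<n])) = 1)}"
  have "closedin (B2 {0,1}) C"
    unfolding closedin_B2_iff
  proof (intro conjI allI impI)
    show "C \<subseteq> topspace (dprod {0,1}) \<times> UNIV" by (auto simp: C_def)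
    fix y z assume y: "y \<in> topspace (dprod {0,1})"
      and ap: "\<forall>n. \<exists>y' z'. (y', z') \<in> C \<and> agree n y' y \<and> agree n z' z"
    have "y (to_nat (map y [0..<n], map z [0..<n])) = 1" for n
    proof -
      define K where "K = to_nat (map y [0..<n], map z [0..<n])"
      obtain y' z' where yz: "(y', z') \<in> C" "agree (max n (Suc K)) y' y" "agree (max n (Suc K)) z' z"
        using ap by blast
      have e1: "map y' [0..<n] = map y [0..<n]" using yz(2) agree_map by (metis agree_mono max.cobounded1)
      have e2: "map z' [0..<n] = map z [0..<n]" using yz(3) agree_map by (metis agree_mono max.cobounded1)
      have e3: "y' K = y K" using yz(2) by (simp add: agree_def)
      have h: "y' (to_nat (map y' [0..<n], map z' [0..<n])) = 1" using yz(1) by (simp add: C_def)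
      show ?thesis using h e1 e2 e3 K_def by metis
    qed
    then show "(y, z) \<in> C" using y by (simp add: C_def)
  qed
  moreover have "DG = fst ` C" by (force simp: DG_def C_def)
  ultimately show ?thesis unfolding analytic_set_iff by blast
qed

lemma DG_compl_not_analytic: "\<not> analytic_set {0,1} (topspace (dprod {0,1}) - DG)"
proof
  assume "analytic_set {0,1} (topspace (dprod {0,1}) - DG)"
  then obtain C where C: "closedin (B2 {0,1}) C" "topspace (dprod {0,1}) - DG = fst ` C"
    unfolding analytic_set_iff by blast
  define TC where "TC = {(map y' [0..<n], map z' [0..<n]) | y' z' n. (y', z') \<in> C}"
  define x where "x = (\<lambda>k. if (from_nat k :: nat list \<times> nat list) \<in> TC then 1 else 0::nat)"
  have xt: "x \<in> topspace (dprod {0,1})" by (simp add: x_def)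
  have key: "y \<in> fst ` C \<longleftrightarrow> (\<exists>z. \<forall>n. (map y [0..<n], map z [0..<n]) \<in> TC)"
    if y: "y \<in> topspace (dprod {0,1})" for y
  proof
    assume "y \<in> fst ` C"
    then obtain z where "(y, z) \<in> C" by force
    then show "\<exists>z. \<forall>n. (map y [0..<n], map z [0..<n]) \<in> TC" by (auto simp: TC_def)
  next
    assume "\<exists>z. \<forall>n. (map y [0..<n], map z [0..<n]) \<in> TC"
    then obtain z where z: "\<forall>n. (map y [0..<n], map z [0..<n]) \<in> TC" by blast
    have "\<forall>n. \<exists>y' z'. (y', z') \<in> C \<and> agree n y' y \<and> agree n z' z"
    proof
      fix n
      obtain y' z' m where e: "(map y [0..<n], map z [0..<n]) = (map y' [0..<m], map z' [0..<m])"
        and yzC: "(y', z') \<in> C"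
        using z unfolding TC_def by blast
      have e1: "map y [0..<n] = map y' [0..<m]" and e2: "map z [0..<n] = map z' [0..<m]"
        using e by simp_all
      have "length (map y [0..<n]) = length (map y' [0..<m])" using e1 by (rule arg_cong)
      then have "m = n" by simp
      then have "agree n y' y" "agree n z' z" using e1 e2 unfolding agree_map by simp_all
      then show "\<exists>y' z'. (y', z') \<in> C \<and> agree n y' y \<and> agree n z' z"
        using yzC by blast
    qed
    then have "(y, z) \<in> C" using C(1)[unfolded closedin_B2_iff] y by blast
    then show "y \<in> fst ` C" by force
  qed
  have "x \<in> fst ` C \<longleftrightarrow> x \<in> DG"
  proof -
    have "x \<in> fst ` C \<longleftrightarrow> (\<exists>z. \<forall>n. (map x [0..<n], map z [0..<n]) \<in> TC)" using key[OF xt] .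
    also have "\<dots> \<longleftrightarrow> (\<exists>z::nat\<Rightarrow>nat. \<forall>n. x (to_nat (map x [0..<n], map z [0..<n])) = 1)"
      by (simp add: x_def)
    also have "\<dots> \<longleftrightarrow> x \<in> DG" using xt by (simp add: DG_def)
    finally show ?thesis .
  qed
  moreover have "x \<in> fst ` C \<longleftrightarrow> x \<notin> DG" using C(2) xt by blast
  ultimately show False by blast
qed

lemma complete_not_borel:
  assumes "sigma11_complete \<Sigma> F"
  shows "\<not> borel_in (cantor_top \<Sigma>) F"
proof
  assume B: "borel_in (cantor_top \<Sigma>) F"
  have "DG \<subseteq> topspace (cantor_top {0,1})" by (auto simp: DG_def cantor_dprod)
  moreover have "finite {0,1::nat}" by simp
  moreover have "analytic_set {0,1} DG" by (rule DG_analytic)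
  ultimately have "\<exists>f. continuous_map (cantor_top {0,1}) (cantor_top \<Sigma>) f \<and>
    DG = {y \<in> topspace (cantor_top {0,1}). f y \<in> F}"
    using assms unfolding sigma11_complete_def by blast
  then obtain f where f: "continuous_map (cantor_top {0,1}) (cantor_top \<Sigma>) f"
    "DG = {y \<in> topspace (cantor_top {0,1}). f y \<in> F}"
    by blast
  have "borel_in (cantor_top {0,1}) DG" using borel_preimage[OF f(1) B] f(2) by simp
  then have "borel_in (cantor_top {0,1}) (topspace (cantor_top {0,1}) - DG)"
    unfolding borel_in_def by (rule sigma_sets.Compl)
  then have "analytic_set {0,1} (topspace (dprod {0,1}) - DG)"
    using borel_analytic[of "{0,1}"] unfolding cantor_dprod by blast
  then show False using DG_compl_not_analytic by blast
qed


definition trA :: "(nat \<times> nat \<times> int \<times> nat) set" where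
  "trA = {(0,0,1,0),(0,1,0,0),(0,5,0,0),(0,2,0,0),(0,2,0,2),(0,3,0,0),(0,3,0,3),
          (1,0,1,1),(1,1,0,1),(1,2,0,1),(1,3,0,1),(1,5,0,1),(1,4,0,0),
          (2,1,-1,2),(2,0,1,1),(2,2,0,1),(2,3,0,1),(2,5,0,1),(2,4,0,0),
          (3,1,-1,2),(3,0,1,1),(3,2,0,1),(3,3,0,1),(3,5,0,1),(3,4,0,0)}"

definition AA :: bcba where
  "AA = \<lparr>states = {0,1,2,3}, alph = {0,1,2,3,4,5}, trans = trA, init = 0, final = {3}\<rparr>"

lemma wf_AA: "wf_bcba AA"
  by (auto simp: wf_bcba_def AA_def trA_def)

lemma omega_lang_analytic: "analytic_set (alph A) (omega_lang A)"
proof -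
  let ?Q = "\<lambda>z n. fst (from_nat (z n) :: nat \<times> nat \<times> nat)"
  let ?Cn = "\<lambda>z n. fst (snd (from_nat (z n) :: nat \<times> nat \<times> nat))"
  let ?G = "\<lambda>z n. snd (snd (from_nat (z n) :: nat \<times> nat \<times> nat))"
  define C where "C = {(x, z). (\<forall>n. x n \<in> alph A) \<and> ?Q z 0 = init A \<and> ?Cn z 0 = 0 \<and>
     (\<forall>i. \<exists>d. (?Q z i, x i, d, ?Q z (Suc i)) \<in> trans A \<and> int (?Cn z (Suc i)) = int (?Cn z i) + d) \<and>
     (\<forall>i. i \<le> ?G z i \<and> ?Q z (?G z i) \<in> final A)}"
  have "closedin (B2 (alph A)) C"
    unfolding closedin_B2_iff
  proof (intro conjI allI impI)
    show "C \<subseteq> topspace (dprod (alph A)) \<times> UNIV" by (auto simp: C_def)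
    fix x z assume x: "x \<in> topspace (dprod (alph A))"
      and ap: "\<forall>n. \<exists>y' z'. (y', z') \<in> C \<and> agree n y' x \<and> agree n z' z"
    have a1: "?Q z 0 = init A \<and> ?Cn z 0 = 0"
    proof -
      obtain x' z' where "(x', z') \<in> C" "agree 1 z' z" using ap by blast
      then show ?thesis by (auto simp: C_def agree_def)
    qed
    have a2: "\<exists>d. (?Q z i, x i, d, ?Q z (Suc i)) \<in> trans A \<and> int (?Cn z (Suc i)) = int (?Cn z i) + d" for i
    proof -
      obtain x' z' where xz: "(x', z') \<in> C" "agree (Suc (Suc i)) x' x" "agree (Suc (Suc i)) z' z"
        using ap by blast
      have e: "x' i = x i" "z' i = z i" "z' (Suc i) = z (Suc i)" using xz(2,3) by (auto simp: agree_def)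
      have "\<exists>d. (?Q z' i, x' i, d, ?Q z' (Suc i)) \<in> trans A \<and> int (?Cn z' (Suc i)) = int (?Cn z' i) + d"
        using xz(1) unfolding C_def by blast
      then show ?thesis unfolding e .
    qed
    have a3: "i \<le> ?G z i \<and> ?Q z (?G z i) \<in> final A" for i
    proof -
      obtain x' z' where xz: "(x', z') \<in> C" "agree (Suc (max i (?G z i))) z' z"
        using ap by blast
      have e: "z' i = z i" "z' (?G z i) = z (?G z i)" using xz(2) by (auto simp: agree_def)
      have "i \<le> ?G z' i \<and> ?Q z' (?G z' i) \<in> final A"
        using xz(1) unfolding C_def by blast
      then show ?thesis unfolding e(1) e(2) .
    qed
    show "(x, z) \<in> C" using x a1 a2 a3 by (simp add: C_def)
  qed
  moreover have "omega_lang A = fst ` C"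
  proof
    show "fst ` C \<subseteq> omega_lang A"
    proof
      fix x assume "x \<in> fst ` C"
      then obtain z where xz: "(x, z) \<in> C" by force
      have run: "is_run A x (?Q z) (?Cn z)" using xz by (simp add: C_def is_run_def)
      have "infinite {i. ?Q z i \<in> final A}"
        unfolding infinite_nat_iff_unbounded_le
      proof
        fix m show "\<exists>n\<ge>m. n \<in> {i. ?Q z i \<in> final A}"
          using xz by (intro exI[of _ "?G z m"]) (simp add: C_def)
      qed
      then show "x \<in> omega_lang A" using run xz by (auto simp: omega_lang_def C_def)
    qed
    show "omega_lang A \<subseteq> fst ` C"
    proof
      fix x assume "x \<in> omega_lang A"
      then obtain q c where x: "\<forall>n. x n \<in> alph A" and run: "is_run A x q c"
        and inf: "infinite {i. q i \<in> final A}"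
        by (auto simp: omega_lang_def)
      define g where "g = (\<lambda>i. LEAST j. i \<le> j \<and> q j \<in> final A)"
      have g: "i \<le> g i \<and> q (g i) \<in> final A" for i
      proof -
        obtain j where "i \<le> j" "q j \<in> final A" using inf unfolding infinite_nat_iff_unbounded_le by blast
        then have "i \<le> j \<and> q j \<in> final A" by blast
        then show ?thesis unfolding g_def by (rule LeastI)
      qed
      define z where "z = (\<lambda>n. to_nat (q n, c n, g n))"
      have "\<And>n. ?Q z n = q n" "\<And>n. ?Cn z n = c n" "\<And>n. ?G z n = g n" by (auto simp: z_def)
      then have "(x, z) \<in> C" using x run g by (simp add: C_def is_run_def)
      then show "x \<in> fst ` C" by force
    qed
  qed
  ultimately show ?thesis unfolding analytic_set_iff by blast
qed


section \<open>Layout of the reduction word\<close>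

definition PP :: "nat \<Rightarrow> nat" where "PP k = (Suc k) ^ k"

fun Aa :: "nat \<Rightarrow> nat" where
  "Aa 0 = 0"
| "Aa (Suc k) = Aa k + PP k * (Aa k + 1)"

definition Wd :: "nat \<Rightarrow> nat" where "Wd k = Aa k + 1"
definition LL :: "nat \<Rightarrow> nat" where "LL k = Aa (Suc k)"
definition Zc :: "nat \<Rightarrow> nat" where "Zc k = Wd k + 2 + 2 * LL k"

fun BB :: "nat \<Rightarrow> nat" where
  "BB 0 = 0"
| "BB (Suc k) = BB k + PP k * Zc k + 1"

lemma PP_pos: "0 < PP k" by (simp add: PP_def)
lemma Wd_pos: "0 < Wd k" by (simp add: Wd_def)
lemma Zc_gt: "Wd k + 2 * LL k + 1 < Zc k" by (simp add: Zc_def)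

lemma Aa_Suc_Wd: "Aa (Suc k) = Aa k + PP k * Wd k" by (simp add: Wd_def)

lemma BB_Suc_gt: "BB k < BB (Suc k)" by simp

lemma BB_strict_mono: "strict_mono BB"
  by (rule strict_mono_Suc_iff[THEN iffD2]) simp

lemma BB_ge: "k \<le> BB k"
  by (induction k) auto

definition stg :: "nat \<Rightarrow> nat" where "stg n = (LEAST k. n < BB (Suc k))"

lemma stg_props: "BB (stg n) \<le> n \<and> n < BB (Suc (stg n))"
proof -
  have ex: "n < BB (Suc n)" using BB_ge[of "Suc n"] by simp
  have lt: "n < BB (Suc (stg n))" unfolding stg_def by (rule LeastI[of _ n]) (rule ex)
  have "BB (stg n) \<le> n"
  proof (cases "stg n")
    case 0 then show ?thesis by simp
  next
    case (Suc m)
    have "\<not> n < BB (Suc m)"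
    proof
      assume "n < BB (Suc m)"
      then have "stg n \<le> m" unfolding stg_def by (rule Least_le)
      then show False using Suc by simp
    qed
    then show ?thesis using Suc by simp
  qed
  then show ?thesis using lt by simp
qed

lemma stg_eq: assumes "BB k \<le> n" "n < BB (Suc k)" shows "stg n = k"
proof -
  have a: "BB (stg n) \<le> n" "n < BB (Suc (stg n))" using stg_props by auto
  show ?thesis
  proof (rule ccontr)
    assume "stg n \<noteq> k"
    then consider "stg n < k" | "k < stg n" by linarith
    then show False
    proof cases
      case 1
      then have "Suc (stg n) \<le> k" by simp
      then have "BB (Suc (stg n)) \<le> BB k" using BB_strict_mono by (metis strict_mono_less_eq)
      then show False using a assms by simp
    next
      case 2
      then have "Suc k \<le> stg n" by simp
      then have "BB (Suc k) \<le> BB (stg n)" using BB_strict_mono by (metis strict_mono_less_eq)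
      then show False using a assms by simp
    qed
  qed
qed

subsection \<open>Nodes, keys and ranks\<close>

definition NN :: "nat \<Rightarrow> nat list set" where
  "NN k = {v. length v \<le> k \<and> (\<forall>x\<in>set v. x < k)}"

lemma NN_0: "NN 0 = {[]}" by (auto simp: NN_def)

definition digit :: "nat \<Rightarrow> nat list \<Rightarrow> nat \<Rightarrow> nat" where
  "digit k v i = (if i < length v then v ! i else k)"

fun kh :: "nat \<Rightarrow> nat list \<Rightarrow> nat \<Rightarrow> nat" where
  "kh k v 0 = 0"
| "kh k v (Suc n) = kh k v n * Suc k + digit k v n"

lemma digit_le: "v \<in> NN k \<Longrightarrow> digit k v i \<le> k"
  by (auto simp: digit_def NN_def less_imp_le)

lemma kh_bound: "v \<in> NN k \<Longrightarrow> kh k v n < (Suc k) ^ n"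
proof (induction n)
  case 0 then show ?case by simp
next
  case (Suc n)
  have "kh k v n * Suc k + digit k v n < (kh k v n + 1) * Suc k"
    using digit_le[OF Suc.prems, of n] by simp
  also have "\<dots> \<le> Suc k ^ n * Suc k"
    using Suc by (intro mult_right_mono) simp_all
  finally show ?case by (simp add: mult.commute)
qed

lemma kh_strict:
  assumes "u \<in> NN k" "v \<in> NN k" "i < n" "\<forall>j<i. digit k u j = digit k v j" "digit k v i < digit k u i"
  shows "kh k v n < kh k u n"
  using assms(3)
proof (induction n)
  case 0 then show ?case by simp
next
  case (Suc n)
  show ?case
  proof (cases "i = n")
    case True
    have "kh k u n = kh k v n"
    proof -
      have "\<forall>m\<le>i. kh k u m = kh k v m"
      proof (intro allI impI)
        fix m assume "m \<le> i" then show "kh k u m = kh k v m"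
          using assms(4) by (induction m) auto
      qed
      then show ?thesis using True by simp
    qed
    then show ?thesis using True assms(5) by simp
  next
    case False
    then have "i < n" using Suc by simp
    then have "kh k v n + 1 \<le> kh k u n" using Suc.IH by simp
    then have "(kh k v n + 1) * Suc k \<le> kh k u n * Suc k" by (rule mult_right_mono) simp
    moreover have "digit k v n \<le> k" using digit_le[OF assms(2)] .
    ultimately show ?thesis by simp
  qed
qed

definition key :: "nat \<Rightarrow> nat list \<Rightarrow> nat" where "key k v = kh k v k"

lemma key_bound: "v \<in> NN k \<Longrightarrow> key k v < PP k"
  by (simp add: key_def PP_def kh_bound)

definition KBle :: "nat list \<Rightarrow> nat list \<Rightarrow> bool" where
  "KBle u v \<longleftrightarrow> (\<forall>d. take d u = take d v \<longrightarrow> d < length v \<longrightarrow> d < length u \<and> u ! d \<le> v ! d)"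

lemma key_KBle:
  assumes u: "u \<in> NN k" and v: "v \<in> NN k" and le: "key k u \<le> key k v"
  shows "KBle u v"
  unfolding KBle_def
proof (intro allI impI)
  fix d assume t: "take d u = take d v" and dv: "d < length v"
  have lt: "length (take d v) = d" using dv by simp
  have "length (take d u) = d" using t lt by simp
  then have du: "d \<le> length u" by simp
  have eq: "\<forall>j<d. digit k u j = digit k v j"
  proof (intro allI impI)
    fix j assume "j < d"
    have "take d u ! j = take d v ! j" using t by simp
    then have "u ! j = v ! j" using \<open>j < d\<close> by simp
    then show "digit k u j = digit k v j" using \<open>j < d\<close> du dv by (simp add: digit_def)
  qed
  have dk: "d < k" using dv v by (auto simp: NN_def)
  show "d < length u \<and> u ! d \<le> v ! d"
  proof (rule ccontr)
    assume "\<not> (d < length u \<and> u ! d \<le> v ! d)"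
    then have "digit k v d < digit k u d"
      using dv v by (auto simp: digit_def NN_def)
    then have "kh k v k < kh k u k" using kh_strict[OF u v dk eq] by blast
    then show False using le by (simp add: key_def)
  qed
qed

lemma KBle_antisym:
  assumes "KBle u v" "KBle v u" shows "u = v"
proof -
  have "take d u = take d v" for d
  proof (induction d)
    case 0 then show ?case by simp
  next
    case (Suc d)
    show ?case
    proof (cases "d < length v")
      case True
      then have "d < length u \<and> u ! d \<le> v ! d" using assms(1) Suc unfolding KBle_def by blast
      moreover have "v ! d \<le> u ! d"
      proof -
        have "take d v = take d u" using Suc.IH by simp
        then show ?thesis using assms(2) calculation unfolding KBle_def by blast
      qed
      ultimately show ?thesis using Suc True by (simp add: take_Suc_conv_app_nth)
    next
      case False
      have "take d v = take d u" using Suc.IH by simp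
      then have "\<not> d < length u" using assms(2) False unfolding KBle_def by blast
      then show ?thesis using Suc False by simp
    qed
  qed
  then have "take (length u + length v) u = take (length u + length v) v" by blast
  then show ?thesis by simp
qed

definition rnk :: "nat \<Rightarrow> nat list \<Rightarrow> nat" where "rnk k v = PP k - 1 - key k v"

lemma rank_lt: "rnk k v < PP k" using PP_pos by (simp add: rnk_def)

lemma rank_le_iff: "u \<in> NN k \<Longrightarrow> v \<in> NN k \<Longrightarrow> rnk k u \<le> rnk k v \<longleftrightarrow> key k v \<le> key k u"
  using key_bound[of u k] key_bound[of v k] unfolding rnk_def by linarith

lemma rank_inj: "u \<in> NN k \<Longrightarrow> v \<in> NN k \<Longrightarrow> rnk k u = rnk k v \<Longrightarrow> u = v"
proof -
  assume u: "u \<in> NN k" and v: "v \<in> NN k" and e: "rnk k u = rnk k v"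
  have "key k u \<le> key k v" "key k v \<le> key k u" using rank_le_iff[OF u v] rank_le_iff[OF v u] e by simp_all
  then show "u = v" using key_KBle[OF u v] key_KBle[OF v u] KBle_antisym by blast
qed

definition cellex :: "nat \<Rightarrow> nat \<Rightarrow> bool" where "cellex k r \<longleftrightarrow> (\<exists>v\<in>NN k. rnk k v = r)"
definition cellnode :: "nat \<Rightarrow> nat \<Rightarrow> nat list" where "cellnode k r = (THE v. v \<in> NN k \<and> rnk k v = r)"

lemma cellnode_rank: "v \<in> NN k \<Longrightarrow> cellnode k (rnk k v) = v"
  unfolding cellnode_def by (rule the_equality) (auto intro: rank_inj)

lemma cellex_rank: "v \<in> NN k \<Longrightarrow> cellex k (rnk k v)"
  by (auto simp: cellex_def)

lemma cellnode_props: "cellex k r \<Longrightarrow> cellnode k r \<in> NN k \<and> rnk k (cellnode k r) = r"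
proof -
  assume "cellex k r"
  then obtain v where v: "v \<in> NN k" "rnk k v = r" by (auto simp: cellex_def)
  then have "cellnode k r = v" using cellnode_rank[OF v(1)] by simp
  then show ?thesis using v by simp
qed

definition alpha :: "nat \<Rightarrow> nat list \<Rightarrow> nat" where "alpha k v = Aa k + (rnk k v + 1) * Wd k"

lemma alpha_le: "alpha k v \<le> LL k"
proof -
  have "(rnk k v + 1) * Wd k \<le> PP k * Wd k" using rank_lt[of k v] by (intro mult_right_mono) auto
  then show ?thesis unfolding alpha_def LL_def Aa_Suc_Wd by simp
qed

lemma alpha_gt: "Aa k < alpha k v" by (simp add: alpha_def Wd_def)

lemma alpha_prev_le: "alpha k u \<le> Aa (Suc k)" using alpha_le by (simp add: LL_def)

definition slot1 :: "nat \<Rightarrow> nat list \<Rightarrow> bool" where "slot1 k v \<longleftrightarrow> k = 0 \<or> v \<in> NN (k - 1)"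
definition slot2 :: "nat \<Rightarrow> nat list \<Rightarrow> bool" where "slot2 k v \<longleftrightarrow> 0 < k \<and> v \<noteq> [] \<and> butlast v \<in> NN (k - 1)"
definition pl1 :: "nat \<Rightarrow> nat list \<Rightarrow> nat" where "pl1 k v = alpha k v - (if k = 0 then 0 else alpha (k - 1) v)"
definition pl2 :: "nat \<Rightarrow> nat list \<Rightarrow> nat" where "pl2 k v = alpha k v - alpha (k - 1) (butlast v)"

lemma pl1_le: "pl1 k v \<le> LL k" using alpha_le[of k v] by (simp add: pl1_def)
lemma pl2_le: "pl2 k v \<le> LL k" using alpha_le[of k v] by (simp add: pl2_def)

definition cl :: "nat list set \<Rightarrow> nat \<Rightarrow> nat \<Rightarrow> nat \<Rightarrow> nat" where
  "cl T k r q =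
    (if q < Wd k then 0
     else if q = Wd k then (if cellex k r \<and> slot1 k (cellnode k r) \<and> cellnode k r \<in> T then 2 else 5)
     else if q \<le> Wd k + LL k then
       (if cellex k r \<and> slot1 k (cellnode k r) \<and> q - Wd k \<le> pl1 k (cellnode k r) then 1 else 5)
     else if q = Wd k + LL k + 1 then (if cellex k r \<and> slot2 k (cellnode k r) \<and> cellnode k r \<in> T then 3 else 5)
     else (if cellex k r \<and> slot2 k (cellnode k r) \<and> q - (Wd k + LL k + 1) \<le> pl2 k (cellnode k r) then 1 else 5))"

definition sl :: "nat list set \<Rightarrow> nat \<Rightarrow> nat \<Rightarrow> nat" where
  "sl T k ofs = (if ofs < PP k * Zc k then cl T k (ofs div Zc k) (ofs mod Zc k) else 4)"

definition wd :: "nat list set \<Rightarrow> nat \<Rightarrow> nat" where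
  "wd T n = sl T (stg n) (n - BB (stg n))"

lemma wd_stage: "ofs \<le> PP k * Zc k \<Longrightarrow> wd T (BB k + ofs) = sl T k ofs"
proof -
  assume ofs: "ofs \<le> PP k * Zc k"
  have "stg (BB k + ofs) = k" using ofs by (intro stg_eq) auto
  then show ?thesis by (simp add: wd_def)
qed

lemma wd_cell: "r < PP k \<Longrightarrow> q < Zc k \<Longrightarrow> wd T (BB k + r * Zc k + q) = cl T k r q"
proof -
  assume r: "r < PP k" and q: "q < Zc k"
  have "r * Zc k + q < PP k * Zc k"
  proof -
    have "r * Zc k + q < r * Zc k + Zc k" using q by simp
    also have "\<dots> = Suc r * Zc k" by simp
    also have "\<dots> \<le> PP k * Zc k" using r by (intro mult_right_mono) auto
    finally show ?thesis .
  qed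
  moreover have "(r * Zc k + q) div Zc k = r" "(r * Zc k + q) mod Zc k = q" using q by auto
  ultimately show ?thesis using wd_stage[of "r * Zc k + q" k T] by (simp add: sl_def add.assoc)
qed

lemma wd_hash: "wd T (BB k + PP k * Zc k) = 4"
  using wd_stage[of "PP k * Zc k" k T] by (simp add: sl_def)

lemma wd_range: "wd T n \<in> {0,1,2,3,4,5}"
  by (simp add: wd_def sl_def cl_def)

lemma wd_not_hash: "ofs < PP k * Zc k \<Longrightarrow> wd T (BB k + ofs) \<noteq> 4"
  using wd_stage[of ofs k T] by (simp add: sl_def cl_def)

definition acnt :: "nat list set \<Rightarrow> nat \<Rightarrow> nat" where
  "acnt T n = card {i. i < n \<and> wd T i = 0}"

lemma acnt_0: "acnt T 0 = 0" by (simp add: acnt_def)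

lemma acnt_Suc: "acnt T (Suc n) = acnt T n + (if wd T n = 0 then 1 else 0)"
proof -
  have "{i. i < Suc n \<and> wd T i = 0} = {i. i < n \<and> wd T i = 0} \<union> (if wd T n = 0 then {n} else {})"
    by (auto simp: less_Suc_eq)
  then show ?thesis by (simp add: acnt_def)
qed

lemma acnt_mono: "m \<le> n \<Longrightarrow> acnt T m \<le> acnt T n"
  unfolding acnt_def by (intro card_mono) auto

lemma wd_zero_iff: "ofs < PP k * Zc k \<Longrightarrow> wd T (BB k + ofs) = 0 \<longleftrightarrow> ofs mod Zc k < Wd k"
  using wd_stage[of ofs k T] by (simp add: sl_def cl_def)

lemma acnt_in_stage:
  assumes base: "acnt T (BB k) = Aa k"
  shows "ofs \<le> PP k * Zc k \<Longrightarrow> acnt T (BB k + ofs) = Aa k + (ofs div Zc k) * Wd k + min (ofs mod Zc k) (Wd k)"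
proof (induction ofs)
  case 0 then show ?case using base by simp
next
  case (Suc ofs)
  then have lt: "ofs < PP k * Zc k" by simp
  have IH: "acnt T (BB k + ofs) = Aa k + (ofs div Zc k) * Wd k + min (ofs mod Zc k) (Wd k)"
    using Suc by simp
  have step: "acnt T (BB k + Suc ofs) = acnt T (BB k + ofs) + (if ofs mod Zc k < Wd k then 1 else 0)"
    using acnt_Suc[of T "BB k + ofs"] wd_zero_iff[OF lt, of T] by simp
  have WZ: "Wd k < Zc k" using Zc_gt[of k] by simp
  have mlt: "ofs mod Zc k < Zc k" using WZ by simp
  show ?case
  proof (cases "Suc (ofs mod Zc k) = Zc k")
    case True
    then have "Suc ofs mod Zc k = 0" by (simp add: mod_Suc)
    moreover then have "Suc ofs div Zc k = Suc (ofs div Zc k)" by (simp add: div_Suc)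
    moreover have "\<not> ofs mod Zc k < Wd k" using True Zc_gt[of k] by simp
    moreover have "min (ofs mod Zc k) (Wd k) = Wd k" using True Zc_gt[of k] by simp
    ultimately show ?thesis using step IH by simp
  next
    case False
    then have m: "Suc ofs mod Zc k = Suc (ofs mod Zc k)" by (simp add: mod_Suc)
    then have "Suc ofs div Zc k = ofs div Zc k" by (simp add: div_Suc)
    then show ?thesis using step IH m by (auto simp: min_def)
  qed
qed

lemma acnt_BB: "acnt T (BB k) = Aa k"
proof (induction k)
  case 0 then show ?case by (simp add: acnt_0)
next
  case (Suc k)
  have "acnt T (BB k + PP k * Zc k) = Aa k + PP k * Wd k"
    using acnt_in_stage[OF Suc, of "PP k * Zc k"] PP_pos[of k] Zc_gt[of k] by simp
  moreover have "BB (Suc k) = Suc (BB k + PP k * Zc k)" by simp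
  ultimately show ?case using acnt_Suc[of T "BB k + PP k * Zc k"] wd_hash[of T k] by (simp add: Wd_def algebra_simps)
qed

lemma acnt_stage: "ofs \<le> PP k * Zc k \<Longrightarrow> acnt T (BB k + ofs) = Aa k + (ofs div Zc k) * Wd k + min (ofs mod Zc k) (Wd k)"
  using acnt_in_stage[OF acnt_BB] .

lemma acnt_cell: "r < PP k \<Longrightarrow> q < Zc k \<Longrightarrow> acnt T (BB k + r * Zc k + q) = Aa k + r * Wd k + min q (Wd k)"
proof -
  assume r: "r < PP k" and q: "q < Zc k"
  have "r * Zc k + q \<le> PP k * Zc k"
  proof -
    have "r * Zc k + q < Suc r * Zc k" using q by simp
    also have "\<dots> \<le> PP k * Zc k" using r by (intro mult_right_mono) auto
    finally show ?thesis by simp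
  qed
  then show ?thesis using acnt_stage[of "r * Zc k + q" k T] q by (simp add: add.assoc)
qed


definition hpos :: "nat \<Rightarrow> nat \<Rightarrow> bool \<Rightarrow> nat" where
  "hpos k r b = BB k + r * Zc k + Wd k + (if b then LL k + 1 else 0)"
definition plen :: "nat \<Rightarrow> nat list \<Rightarrow> bool \<Rightarrow> nat" where
  "plen k v b = (if b then pl2 k v else pl1 k v)"
definition slotk :: "nat \<Rightarrow> nat list \<Rightarrow> bool \<Rightarrow> bool" where
  "slotk k v b = (if b then slot2 k v else slot1 k v)"
definition hl :: "bool \<Rightarrow> nat" where "hl b = (if b then 3 else 2)"

lemma plen_le: "plen k v b \<le> LL k"
  using pl1_le pl2_le by (simp add: plen_def)

lemma hq_lt: "Wd k + (if b then LL k + 1 else 0) < Zc k"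
  using Zc_gt[of k] by auto

lemma wd_head:
  assumes "r < PP k"
  shows "wd T (hpos k r b) = (if cellex k r \<and> slotk k (cellnode k r) b \<and> cellnode k r \<in> T then hl b else 5)"
  using wd_cell[OF assms hq_lt[of k b], of T] Wd_pos[of k]
  by (auto simp: hpos_def cl_def slotk_def hl_def add.assoc)

lemma wd_ptr:
  assumes "r < PP k" "cellex k r" "slotk k (cellnode k r) b" "1 \<le> j" "j \<le> plen k (cellnode k r) b"
  shows "wd T (hpos k r b + j) = 1"
proof -
  have jl: "j \<le> LL k" using assms(5) plen_le[of k _ b] by (rule order.trans)
  define q where "q = Wd k + (if b then LL k + 1 else 0) + j"
  have q: "q < Zc k" using jl Zc_gt[of k] by (auto simp: q_def)
  have "hpos k r b + j = BB k + r * Zc k + q" by (simp add: hpos_def q_def)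
  then have "wd T (hpos k r b + j) = cl T k r q" using wd_cell[OF assms(1) q] by simp
  also have "\<dots> = 1"
    using assms jl by (auto simp: cl_def q_def slotk_def plen_def)
  finally show ?thesis .
qed

lemma ptr_end_le:
  assumes "r < PP k" "v \<in> NN k"
  shows "hpos k r b + plen k v b + 1 \<le> BB k + PP k * Zc k"
proof -
  have "hpos k r b + plen k v b + 1 \<le> BB k + r * Zc k + Zc k"
    using plen_le[of k v b] by (auto simp: hpos_def Zc_def)
  also have "\<dots> = BB k + Suc r * Zc k" by simp
  also have "\<dots> \<le> BB k + PP k * Zc k" using assms(1) mult_le_mono1[of "Suc r" "PP k" "Zc k"] by simp
  finally show ?thesis .
qed

lemma wd_ptr_end:
  assumes "r < PP k" "cellex k r"
  shows "wd T (hpos k r b + plen k (cellnode k r) b + 1) \<noteq> 1"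
proof -
  let ?v = "cellnode k r"
  have pl: "plen k ?v b \<le> LL k" by (rule plen_le)
  show ?thesis
  proof (cases b)
    case False
    define q where "q = Wd k + pl1 k ?v + 1"
    have q: "q < Zc k" using pl False Zc_gt[of k] by (auto simp: q_def plen_def)
    have "hpos k r b + plen k ?v b + 1 = BB k + r * Zc k + q"
      using False by (simp add: hpos_def q_def plen_def)
    then have "wd T (hpos k r b + plen k ?v b + 1) = cl T k r q" using wd_cell[OF assms(1) q] by simp
    also have "\<dots> \<noteq> 1"
      using pl False by (auto simp: cl_def q_def plen_def)
    finally show ?thesis .
  next
    case True
    define q where "q = Wd k + LL k + 2 + pl2 k ?v"
    have "hpos k r b + plen k ?v b + 1 = BB k + r * Zc k + q"
      using True by (simp add: hpos_def q_def plen_def)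
    show ?thesis
    proof (cases "q < Zc k")
      case True': True
      then have "wd T (hpos k r b + plen k ?v b + 1) = cl T k r q"
        using wd_cell[OF assms(1) True'] \<open>hpos k r b + plen k ?v b + 1 = BB k + r * Zc k + q\<close> by simp
      also have "\<dots> \<noteq> 1" by (auto simp: cl_def q_def)
      finally show ?thesis .
    next
      case False
      then have qZ: "q = Zc k" using pl True by (auto simp: q_def plen_def Zc_def)
      then have pos: "hpos k r b + plen k ?v b + 1 = BB k + Suc r * Zc k"
        using \<open>hpos k r b + plen k ?v b + 1 = BB k + r * Zc k + q\<close> by simp
      show ?thesis
      proof (cases "Suc r < PP k")
        case True
        have "wd T (BB k + Suc r * Zc k + 0) = cl T k (Suc r) 0"
          using wd_cell[OF True, of 0 T] Zc_gt[of k] by simp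
        then show ?thesis using pos Wd_pos[of k] by (simp add: cl_def)
      next
        case False
        then have "Suc r = PP k" using assms(1) by simp
        then show ?thesis using pos wd_hash[of T k] by simp
      qed
    qed
  qed
qed

lemma acnt_head: "r < PP k \<Longrightarrow> acnt T (hpos k r b) = Aa k + Suc r * Wd k"
  using acnt_cell[of r k "Wd k + (if b then LL k + 1 else 0)" T] hq_lt[of k b]
  by (simp add: hpos_def add.assoc)

lemma acnt_ptr:
  assumes "r < PP k" "j \<le> Suc (LL k)"
  shows "acnt T (hpos k r b + j) = acnt T (hpos k r b)"
proof -
  define q where "q = Wd k + (if b then LL k + 1 else 0) + j"
  have qZ: "q \<le> Zc k" using assms(2) Zc_gt[of k] by (auto simp: q_def Zc_def)
  have Wq: "Wd k \<le> q" by (simp add: q_def)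
  have pos: "hpos k r b + j = BB k + (r * Zc k + q)" by (simp add: hpos_def q_def add.assoc)
  have le: "r * Zc k + q \<le> PP k * Zc k"
  proof -
    have "r * Zc k + q \<le> Suc r * Zc k" using qZ by simp
    also have "\<dots> \<le> PP k * Zc k" using assms(1) mult_le_mono1[of "Suc r" "PP k" "Zc k"] by simp
    finally show ?thesis .
  qed
  have "acnt T (hpos k r b + j) = Aa k + Suc r * Wd k"
  proof (cases "q = Zc k")
    case True
    then have "r * Zc k + q = Suc r * Zc k" by simp
    then show ?thesis using acnt_stage[OF le, of T] pos Zc_gt[of k] by simp
  next
    case False
    then have q: "q < Zc k" using qZ by simp
    then have "(r * Zc k + q) div Zc k = r" "(r * Zc k + q) mod Zc k = q" by auto
    then show ?thesis using acnt_stage[OF le, of T] pos Wq by (simp add: min_def)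
  qed
  then show ?thesis using acnt_head[OF assms(1), of T b] by simp
qed

lemma wd_decode:
  assumes "ofs < PP k * Zc k" "wd T (BB k + ofs) \<in> {2,3}"
  shows "\<exists>r b. r < PP k \<and> BB k + ofs = hpos k r b \<and> cellex k r \<and> slotk k (cellnode k r) b \<and>
     cellnode k r \<in> T \<and> wd T (BB k + ofs) = hl b"
proof -
  define r where "r = ofs div Zc k"
  define q where "q = ofs mod Zc k"
  have r: "r < PP k" using assms(1) by (simp add: r_def less_mult_imp_div_less)
  have Zp: "0 < Zc k" using Zc_gt[of k] by simp
  have q: "q < Zc k" using Zp by (simp add: q_def)
  have ofs: "BB k + ofs = BB k + r * Zc k + q" by (simp add: r_def q_def)
  have w: "wd T (BB k + ofs) = cl T k r q" using wd_cell[OF r q, of T] ofs by (simp add: add.assoc)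
  then have "cl T k r q \<in> {2,3}" using assms(2) by simp
  then consider "q = Wd k \<and> cellex k r \<and> slot1 k (cellnode k r) \<and> cellnode k r \<in> T \<and> cl T k r q = 2"
    | "q = Wd k + LL k + 1 \<and> cellex k r \<and> slot2 k (cellnode k r) \<and> cellnode k r \<in> T \<and> cl T k r q = 3"
    unfolding cl_def by (auto split: if_splits)
  then show ?thesis
  proof cases
    case 1
    then show ?thesis using r ofs w
      by (intro exI[of _ r] exI[of _ False]) (auto simp: hpos_def slotk_def hl_def)
  next
    case 2
    then show ?thesis using r ofs w
      by (intro exI[of _ r] exI[of _ True]) (auto simp: hpos_def slotk_def hl_def add.assoc)
  qed
qed


fun dd :: "(nat \<Rightarrow> nat) \<Rightarrow> nat \<Rightarrow> nat" where
  "dd z 0 = 0"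
| "dd z (Suc k) = (if z (dd z k) < Suc k then Suc (dd z k) else dd z k)"

definition vv :: "(nat \<Rightarrow> nat) \<Rightarrow> nat \<Rightarrow> nat list" where "vv z k = map z [0..<dd z k]"
definition ad :: "(nat \<Rightarrow> nat) \<Rightarrow> nat \<Rightarrow> bool" where "ad z k \<longleftrightarrow> 0 < k \<and> dd z k = Suc (dd z (k - 1))"
definition hp :: "(nat \<Rightarrow> nat) \<Rightarrow> nat \<Rightarrow> nat" where "hp z k = hpos k (rnk k (vv z k)) (ad z k)"
definition pp :: "(nat \<Rightarrow> nat) \<Rightarrow> nat \<Rightarrow> nat" where "pp z k = plen k (vv z k) (ad z k)"
definition DD :: "(nat \<Rightarrow> nat) \<Rightarrow> nat \<Rightarrow> nat" where "DD z k = (if k = 0 then 0 else alpha (k - 1) (vv z (k - 1)))"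

lemma dd_props: "dd z k \<le> k \<and> (\<forall>i<dd z k. z i < k)"
proof (induction k)
  case 0 then show ?case by simp
next
  case (Suc k)
  then show ?case by (auto simp: less_Suc_eq)
qed

lemma vv_NN: "vv z k \<in> NN k"
  using dd_props[of z k] by (auto simp: vv_def NN_def)

lemma vv_step:
  "0 < k \<Longrightarrow> (if ad z k then vv z k \<noteq> [] \<and> butlast (vv z k) = vv z (k - 1) else vv z k = vv z (k - 1))"
proof -
  assume "0 < k"
  then obtain m where m: "k = Suc m" by (cases k) auto
  show ?thesis
    using m by (auto simp: ad_def vv_def butlast_conv_take take_map)
qed

lemma slot_vv: "slotk k (vv z k) (ad z k)"
proof (cases "k = 0")
  case True then show ?thesis by (simp add: slotk_def ad_def slot1_def)
next
  case False
  then have k: "0 < k" by simp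
  show ?thesis
  proof (cases "ad z k")
    case True
    then show ?thesis using vv_step[OF k, of z] vv_NN[of z "k - 1"] k by (simp add: slotk_def slot2_def)
  next
    case False
    then show ?thesis using vv_step[OF k, of z] vv_NN[of z "k - 1"] k by (simp add: slotk_def slot1_def)
  qed
qed

lemma cell_vv: "rnk k (vv z k) < PP k \<and> cellex k (rnk k (vv z k)) \<and> cellnode k (rnk k (vv z k)) = vv z k"
  using rank_lt cellex_rank[OF vv_NN] cellnode_rank[OF vv_NN] by blast

lemma DD_le: "DD z k \<le> Aa k"
proof (cases k)
  case 0 then show ?thesis by (simp add: DD_def)
next
  case (Suc m) then show ?thesis using alpha_prev_le[of m] by (simp add: DD_def)
qed

lemma pp_eq: "pp z k = alpha k (vv z k) - DD z k"
proof (cases "k = 0")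
  case True then show ?thesis by (simp add: pp_def DD_def plen_def ad_def pl1_def)
next
  case False
  then have k: "0 < k" by simp
  show ?thesis
  proof (cases "ad z k")
    case True
    then show ?thesis using vv_step[OF k, of z] k by (simp add: pp_def DD_def plen_def pl2_def)
  next
    case False
    then show ?thesis using vv_step[OF k, of z] k by (simp add: pp_def DD_def plen_def pl1_def)
  qed
qed

lemma DD_le_alpha: "DD z k \<le> alpha k (vv z k)"
  using DD_le[of z k] alpha_gt[of k "vv z k"] by simp

lemma DD_Suc: "DD z (Suc k) = DD z k + pp z k"
  using pp_eq[of z k] DD_le_alpha[of z k] by (simp add: DD_def)

lemma hp_ge: "BB k \<le> hp z k"
  by (simp add: hp_def hpos_def)

lemma hp_end: "Suc (hp z k + pp z k) \<le> BB k + PP k * Zc k"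
  using ptr_end_le[of "rnk k (vv z k)" k "vv z k" "ad z k"] cell_vv[of k z] vv_NN[of z k]
  by (simp add: hp_def pp_def)

lemma acnt_hp: "acnt T (hp z k) = alpha k (vv z k)"
  using acnt_head[of "rnk k (vv z k)" k T "ad z k"] cell_vv[of k z]
  by (simp add: hp_def alpha_def)

context
  fixes T :: "nat list set" and z :: "nat \<Rightarrow> nat"
  assumes zT: "\<And>d. map z [0..<d] \<in> T"
begin

lemma vv_T: "vv z k \<in> T" by (simp add: vv_def zT)

lemma wd_hp: "wd T (hp z k) = hl (ad z k)"
  using wd_head[of "rnk k (vv z k)" k T "ad z k"] cell_vv[of k z] slot_vv[of k z] vv_T[of k]
  by (simp add: hp_def)

lemma wd_pp: "hp z k < n \<Longrightarrow> n \<le> hp z k + pp z k \<Longrightarrow> wd T n = 1"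
proof -
  assume a: "hp z k < n" "n \<le> hp z k + pp z k"
  define j where "j = n - hp z k"
  have "n = hpos k (rnk k (vv z k)) (ad z k) + j" using a by (simp add: j_def hp_def)
  moreover have "1 \<le> j" "j \<le> plen k (cellnode k (rnk k (vv z k))) (ad z k)"
    using a cell_vv[of k z] by (auto simp: j_def pp_def)
  ultimately show ?thesis
    using wd_ptr[of "rnk k (vv z k)" k "ad z k" j T] cell_vv[of k z] slot_vv[of k z] by simp
qed

lemma wd_pp_end: "wd T (Suc (hp z k + pp z k)) \<noteq> 1"
  using wd_ptr_end[of "rnk k (vv z k)" k T "ad z k"] cell_vv[of k z]
  by (simp add: hp_def pp_def)

definition qq :: "nat \<Rightarrow> nat" where
  "qq n = (let k = stg n in
     if n \<le> hp z k then 0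
     else if n = Suc (hp z k) then (if ad z k then 3 else 2)
     else if n \<le> Suc (hp z k) + pp z k then 2 else 1)"

definition dec :: "nat \<Rightarrow> nat" where
  "dec n = DD z (stg n) + min (n - Suc (hp z (stg n))) (pp z (stg n))"

definition cc :: "nat \<Rightarrow> nat" where "cc n = acnt T n - dec n"

lemma stg_hp: "stg (hp z k) = k" "stg (Suc (hp z k)) = k"
  using hp_ge[of k z] hp_end[of z k] by (auto intro!: stg_eq)

lemma dec_le: "dec n \<le> acnt T n"
proof -
  define k where "k = stg n"
  have n: "BB k \<le> n" "n < BB (Suc k)" using stg_props[of n] by (auto simp: k_def)
  show ?thesis
  proof (cases "n \<le> hp z k")
    case True
    then have "dec n = DD z k" by (simp add: dec_def k_def[symmetric])
    also have "\<dots> \<le> Aa k" by (rule DD_le)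
    also have "\<dots> = acnt T (BB k)" by (simp add: acnt_BB)
    also have "\<dots> \<le> acnt T n" using n by (intro acnt_mono) simp
    finally show ?thesis .
  next
    case False
    have "dec n \<le> DD z k + pp z k" by (simp add: dec_def k_def[symmetric])
    also have "\<dots> = alpha k (vv z k)" using pp_eq[of z k] DD_le_alpha[of z k] by simp
    also have "\<dots> = acnt T (hp z k)" by (simp add: acnt_hp)
    also have "\<dots> \<le> acnt T n" using False by (intro acnt_mono) simp
    finally show ?thesis .
  qed
qed

lemma trans_step:
  "\<exists>d. (qq n, wd T n, d, qq (Suc n)) \<in> trA \<and> int (cc (Suc n)) = int (cc n) + d"
proof -
  define k where "k = stg n"
  define h where "h = hp z k"
  define p where "p = pp z k"
  define H where "H = BB k + PP k * Zc k"
  have n: "BB k \<le> n" "n \<le> H" using stg_props[of n] by (auto simp: k_def H_def)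
  have hH: "Suc (h + p) \<le> H" using hp_end[of z k] by (simp add: h_def p_def H_def)
  have hB: "BB k \<le> h" using hp_ge by (simp add: h_def)
  have stgk: "stg m = k" if "BB k \<le> m" "m \<le> H" for m
    using that by (intro stg_eq) (auto simp: H_def)
  have qqk: "qq m = (if m \<le> h then 0 else if m = Suc h then (if ad z k then 3 else 2)
     else if m \<le> Suc h + p then 2 else 1)" if "BB k \<le> m" "m \<le> H" for m
    using stgk[OF that] by (simp add: qq_def h_def p_def)
  have deck: "dec m = DD z k + min (m - Suc h) p" if "BB k \<le> m" "m \<le> H" for m
    using stgk[OF that] by (simp add: dec_def h_def p_def)
  have dl: "dec m \<le> acnt T m" for m by (rule dec_le)
  have acS: "acnt T (Suc n) = acnt T n + (if wd T n = 0 then 1 else 0)" by (rule acnt_Suc)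
  have wdr: "wd T n \<in> {0,1,2,3,4,5}" by (rule wd_range)
  have hash_iff: "wd T n = 4 \<longleftrightarrow> n = H"
  proof
    assume "wd T n = 4"
    show "n = H"
    proof (rule ccontr)
      assume "n \<noteq> H"
      then have "n - BB k < PP k * Zc k" using n by (simp add: H_def)
      then show False using wd_not_hash[of "n - BB k" k T] n \<open>wd T n = 4\<close> by simp
    qed
  next
    assume "n = H" then show "wd T n = 4" using wd_hash by (simp add: H_def)
  qed
  have nextH: "qq (Suc H) = 0 \<and> dec (Suc H) = DD z k + p"
  proof -
    have SH: "Suc H = BB (Suc k)" by (simp add: H_def)
    have "stg (Suc H) = Suc k" using SH by (intro stg_eq) auto
    moreover have "Suc H \<le> hp z (Suc k)" using SH hp_ge[of "Suc k" z] by simp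
    ultimately show ?thesis using DD_Suc[of z k] by (simp add: qq_def dec_def p_def)
  qed
  consider (a) "n < h" | (b) "n = h" | (c) "h < n \<and> n \<le> h + p" | (d) "n = Suc (h + p)" | (e) "Suc (h + p) < n"
    by linarith
  then show ?thesis
  proof cases
    case a
    have nH: "n \<noteq> H" "Suc n \<le> H" using a hH by auto
    have q0: "qq n = 0" "qq (Suc n) = 0" using qqk[of n] qqk[of "Suc n"] n a nH by auto
    have de: "dec (Suc n) = dec n" using deck[of n] deck[of "Suc n"] n a nH by simp
    have w4: "wd T n \<noteq> 4" using hash_iff nH by simp
    have tr: "(0, wd T n, if wd T n = 0 then 1 else 0, 0) \<in> trA"
      using wdr w4 by (auto simp: trA_def)
    show ?thesis using q0 tr acS de dl[of n] by (intro exI[of _ "if wd T n = 0 then 1 else 0"]) (simp add: cc_def)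
  next
    case b
    have nH: "Suc n \<le> H" using b hH by auto
    have q: "qq n = 0" "qq (Suc n) = (if ad z k then 3 else 2)" using qqk[of n] qqk[of "Suc n"] n b nH by auto
    have de: "dec (Suc n) = dec n" using deck[of n] deck[of "Suc n"] n b nH by simp
    have w: "wd T n = hl (ad z k)" using wd_hp b by (simp add: h_def)
    have tr: "(0, wd T n, 0, qq (Suc n)) \<in> trA" using q w by (auto simp: trA_def hl_def)
    show ?thesis using q tr acS de dl[of n] w by (intro exI[of _ 0]) (simp add: cc_def hl_def)
  next
    case c
    have nH: "Suc n \<le> H" using c hH by auto
    have q1: "qq n \<in> {2,3}" using qqk[of n] n c by auto
    have q2: "qq (Suc n) = 2" using qqk[of "Suc n"] n c nH by auto
    have de: "dec (Suc n) = Suc (dec n)" using deck[of n] deck[of "Suc n"] n c nH by auto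
    have w: "wd T n = 1" using wd_pp[of k n] c by (simp add: h_def p_def)
    have tr: "(qq n, wd T n, -1, qq (Suc n)) \<in> trA" using q1 q2 w by (auto simp: trA_def)
    have "dec (Suc n) \<le> acnt T n" using dl[of "Suc n"] acS w by simp
    then show ?thesis using tr acS de w by (intro exI[of _ "-1"]) (simp add: cc_def)
  next
    case d
    have q1: "qq n \<in> {2,3}" using qqk[of n] n d hH by auto
    have de: "dec n = DD z k + p" using deck[of n] n d hH by simp
    have w1: "wd T n \<noteq> 1" using wd_pp_end[of k] d by (simp add: h_def p_def)
    show ?thesis
    proof (cases "n = H")
      case True
      then have "wd T n = 4" using hash_iff by simp
      moreover have "(qq n, 4, 0, 0) \<in> trA" using q1 by (auto simp: trA_def)
      ultimately show ?thesis using nextH True de acS dl[of n] by (intro exI[of _ 0]) (simp add: cc_def)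
    next
      case False
      then have nH: "Suc n \<le> H" using n by simp
      have q2: "qq (Suc n) = 1" using qqk[of "Suc n"] n d nH by auto
      have de2: "dec (Suc n) = DD z k + p" using deck[of "Suc n"] n d nH by simp
      have w4: "wd T n \<noteq> 4" using hash_iff False by simp
      have tr: "(qq n, wd T n, if wd T n = 0 then 1 else 0, qq (Suc n)) \<in> trA"
        using q1 q2 w1 w4 wdr by (auto simp: trA_def)
      show ?thesis using tr acS de de2 dl[of n]
        by (intro exI[of _ "if wd T n = 0 then 1 else 0"]) (simp add: cc_def)
    qed
  next
    case e
    have q1: "qq n = 1" using qqk[of n] n e by auto
    have de: "dec n = DD z k + p" using deck[of n] n e by simp
    show ?thesis
    proof (cases "n = H")
      case True
      then have "wd T n = 4" using hash_iff by simp
      moreover have "(qq n, 4, 0, 0) \<in> trA" using q1 by (auto simp: trA_def)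
      ultimately show ?thesis using nextH True de acS dl[of n] by (intro exI[of _ 0]) (simp add: cc_def)
    next
      case False
      then have nH: "Suc n \<le> H" using n by simp
      have q2: "qq (Suc n) = 1" using qqk[of "Suc n"] n e nH by auto
      have de2: "dec (Suc n) = DD z k + p" using deck[of "Suc n"] n e nH by simp
      have w4: "wd T n \<noteq> 4" using hash_iff False by simp
      have tr: "(qq n, wd T n, if wd T n = 0 then 1 else 0, qq (Suc n)) \<in> trA"
        using q1 q2 w4 wdr by (auto simp: trA_def)
      show ?thesis using tr acS de de2 dl[of n]
        by (intro exI[of _ "if wd T n = 0 then 1 else 0"]) (simp add: cc_def)
    qed
  qed
qed

lemma ad_infinite: "infinite {k. ad z k}"
proof
  assume fin: "finite {k. ad z k}"
  then obtain K where K: "\<forall>k\<ge>K. \<not> ad z k"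
    by (metis (mono_tags, lifting) finite_nat_set_iff_bounded_le mem_Collect_eq not_less_eq_eq)
  have const: "dd z k = dd z K" if "k \<ge> K" for k
    using that
  proof (induction k rule: dec_induct)
    case base then show ?case by simp
  next
    case (step k)
    have "\<not> ad z (Suc k)" using K step by simp
    then show ?case using step by (auto simp: ad_def)
  qed
  have big: "\<not> z (dd z K) < Suc k" if "k \<ge> K" for k
  proof
    assume "z (dd z K) < Suc k"
    then have "dd z (Suc k) = Suc (dd z k)" using const[OF that] by simp
    then have "ad z (Suc k)" by (simp add: ad_def)
    then show False using K that by simp
  qed
  show False using big[of "K + z (dd z K)"] by simp
qed

lemma honest_accepts: "wd T \<in> omega_lang AA"
proof -
  have run: "is_run AA (wd T) qq cc"
    unfolding is_run_def
  proof (intro conjI allI)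
    show "qq 0 = init AA"
      using hp_ge[of "stg 0" z] by (simp add: qq_def AA_def)
    show "cc 0 = 0" by (simp add: cc_def acnt_0)
    fix i show "\<exists>d. (qq i, wd T i, d, qq (Suc i)) \<in> trans AA \<and> int (cc (Suc i)) = int (cc i) + d"
      using trans_step[of i] by (simp add: AA_def)
  qed
  have inj: "inj (\<lambda>k. Suc (hp z k))"
  proof (rule injI)
    fix a b assume "Suc (hp z a) = Suc (hp z b)"
    then have "stg (Suc (hp z a)) = stg (Suc (hp z b))" by simp
    then show "a = b" using stg_hp by simp
  qed
  have "(\<lambda>k. Suc (hp z k)) ` {k. ad z k} \<subseteq> {i. qq i \<in> final AA}"
    using stg_hp by (auto simp: qq_def AA_def)
  moreover have "infinite ((\<lambda>k. Suc (hp z k)) ` {k. ad z k})"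
    using ad_infinite inj by (simp add: finite_image_iff inj_on_subset)
  ultimately have "infinite {i. qq i \<in> final AA}" using finite_subset by blast
  moreover have "\<forall>n. wd T n \<in> alph AA" using wd_range by (simp add: AA_def)
  ultimately show ?thesis using run by (auto simp: omega_lang_def)
qed

end


lemma KBle_at: "KBle u v \<Longrightarrow> take d u = take d v \<Longrightarrow> d < length v \<Longrightarrow> d < length u \<and> u ! d \<le> v ! d"
  unfolding KBle_def by blast

lemma eventually_const_decr:
  fixes f :: "nat \<Rightarrow> nat"
  assumes "\<forall>k\<ge>K. f (Suc k) \<le> f k"
  shows "\<exists>K'\<ge>K. \<forall>k\<ge>K'. f k = f K'"
proof -
  define m where "m = (LEAST x. \<exists>k\<ge>K. f k = x)"
  have "\<exists>k\<ge>K. f k = m" unfolding m_def by (rule LeastI[of _ "f K"]) auto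
  then obtain K' where K': "K' \<ge> K" "f K' = m" by blast
  have low: "m \<le> f k" if "k \<ge> K" for k unfolding m_def using that by (intro Least_le) auto
  have dec: "f k \<le> f K'" if "k \<ge> K'" for k
    using that
  proof (induction k rule: dec_induct)
    case base then show ?case by simp
  next
    case (step k)
    then show ?case using assms K'(1) by (meson le_trans)
  qed
  show ?thesis using K' low dec by (intro exI[of _ K']) (metis le_antisym le_trans)
qed

lemma kb_limit:
  fixes s w :: "nat \<Rightarrow> nat list"
  assumes le: "\<And>k. KBle (w k) (s k)"
    and st: "\<And>k. s (Suc k) = w k \<or> (\<exists>m. s (Suc k) = w k @ [m])"
    and inf: "infinite {k. s (Suc k) \<noteq> w k}"
  shows "\<exists>b. \<forall>d. \<exists>k. take d (s k) = map b [0..<d] \<and> d \<le> length (s k)"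
proof -
  define P where "P = (\<lambda>d c. length c = d \<and> (\<exists>K. \<forall>k\<ge>K. d \<le> length (s k) \<and> take d (s k) = c))"
  have ex: "\<exists>c. P d c" for d
  proof (induction d)
    case 0 then show ?case by (auto simp: P_def)
  next
    case (Suc d)
    then obtain c K where c: "length c = d" and K: "\<And>k. k \<ge> K \<Longrightarrow> d \<le> length (s k) \<and> take d (s k) = c"
      unfolding P_def by blast
    have noc: False if "k \<ge> K" "d < length (s k)" "s (Suc k) = c" for k
    proof -
      have tk: "take d (s k) = c" using K that(1) by blast
      consider "s (Suc k) = w k" | m where "s (Suc k) = w k @ [m]" using st by blast
      then show False
      proof cases
        case 1
        then have "w k = c" using that by simp
        then have tt: "take d (w k) = take d (s k)" using tk c by simp
        have "take d (w k) = take d (s k) \<longrightarrow> d < length (s k) \<longrightarrow> d < length (w k) \<and> w k ! d \<le> s k ! d"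
          using le[of k] unfolding KBle_def by blast
        then have "d < length (w k)" using tt that(2) by blast
        then show False using \<open>w k = c\<close> c by simp
      next
        case (2 m)
        then have wk: "w k = butlast c" "d = Suc (length (w k))" using that(3) c by auto
        have "take (length (w k)) (w k) = take (length (w k)) (s k)"
        proof -
          have "take (length (w k)) c = w k" using wk(1) by (simp add: butlast_conv_take)
          moreover have "take (length (w k)) (take d (s k)) = take (length (w k)) (s k)"
            using wk(2) by (simp add: min_def)
          then have "take (length (w k)) (s k) = take (length (w k)) c" using tk by simp
          ultimately show ?thesis by simp
        qed
        moreover have "length (w k) < length (s k)" using that(2) wk(2) by simp
        ultimately show False using KBle_at[OF le[of k]] by fastforce
      qed
    qed
    have A: "\<exists>K'\<ge>K. d < length (s K')"
    proof (rule ccontr)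
      assume nA: "\<not> (\<exists>K'\<ge>K. d < length (s K'))"
      have eq: "s k = c" if "k \<ge> K" for k
      proof -
        have "d \<le> length (s k)" "take d (s k) = c" using K[OF that] by auto
        moreover have "\<not> d < length (s k)" using nA that by blast
        ultimately have "length (s k) = d" by simp
        then show ?thesis using \<open>take d (s k) = c\<close> by simp
      qed
      have "{k. s (Suc k) \<noteq> w k} \<subseteq> {..<K}"
      proof
        fix k assume k: "k \<in> {k. s (Suc k) \<noteq> w k}"
        show "k \<in> {..<K}"
        proof (rule ccontr)
          assume "k \<notin> {..<K}"
          then have kK: "k \<ge> K" by simp
          obtain m where m: "s (Suc k) = w k @ [m]" using st[of k] k by auto
          have sk: "s k = c" "s (Suc k) = c" using eq kK by auto
          then have wc: "w k @ [m] = c" using m by simp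
          then have wk: "w k = butlast c" "length c = Suc (length (w k))"
            by (metis butlast_snoc, metis length_append_singleton)
          have "take (length (w k)) (w k) = take (length (w k)) (s k)"
            using wk sk by (simp add: butlast_conv_take)
          moreover have "length (w k) < length (s k)" using wk sk by simp
          ultimately show False using KBle_at[OF le[of k]] by fastforce
        qed
      qed
      then show False using inf finite_subset by blast
    qed
    then obtain K' where K': "K' \<ge> K" "d < length (s K')" by blast
    have B: "d < length (s k)" if "k \<ge> K'" for k
      using that
    proof (induction k rule: dec_induct)
      case base then show ?case using K' by simp
    next
      case (step k)
      have "d \<le> length (s (Suc k))" using K step K' by simp
      moreover have "s (Suc k) \<noteq> c"
      proof
        assume "s (Suc k) = c"
        then show False using noc[of k] step K' by simp
      qed
      moreover have "take d (s (Suc k)) = c" using K step K' by simp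
      ultimately show ?case
      proof -
        assume a: "d \<le> length (s (Suc k))" "s (Suc k) \<noteq> c" "take d (s (Suc k)) = c"
        show ?case
        proof (rule ccontr)
          assume "\<not> d < length (s (Suc k))"
          then have "length (s (Suc k)) = d" using a(1) by simp
          then show False using a(2,3) by simp
        qed
      qed
    qed
    have C: "s (Suc k) ! d \<le> s k ! d" if "k \<ge> K'" for k
    proof -
      have dk: "d < length (s k)" "d < length (s (Suc k))" using B that by auto
      have tk: "take d (s k) = c" "take d (s (Suc k)) = c" using K that K' by auto
      consider "s (Suc k) = w k" | m where "s (Suc k) = w k @ [m]" using st by blast
      then show ?thesis
      proof cases
        case 1
        then show ?thesis using KBle_at[OF le[of k], of d] dk tk by simp
      next
        case (2 m)
        have "d < length (w k)"
        proof (rule ccontr)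
          assume "\<not> d < length (w k)"
          then have "length (w k) = d" using dk 2 by simp
          then have "w k = c" using tk(2) 2 by simp
          then have "take d (w k) = take d (s k)" using tk c by simp
          then show False using KBle_at[OF le[of k], of d] dk \<open>w k = c\<close> c by simp
        qed
        moreover have "take d (w k) = take d (s k)" using tk 2 calculation by simp
        ultimately have "w k ! d \<le> s k ! d" using KBle_at[OF le[of k], of d] dk by blast
        then show ?thesis using 2 \<open>d < length (w k)\<close> by (simp add: nth_append)
      qed
    qed
    obtain K'' where K'': "K'' \<ge> K'" "\<And>k. k \<ge> K'' \<Longrightarrow> s k ! d = s K'' ! d"
      using eventually_const_decr[of K' "\<lambda>k. s k ! d"] C by blast
    have "P (Suc d) (c @ [s K'' ! d])"
      unfolding P_def
    proof (intro conjI exI[of _ K''] allI impI)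
      show "length (c @ [s K'' ! d]) = Suc d" using c by simp
      fix k assume k: "K'' \<le> k"
      have dl: "d < length (s k)" using B[of k] k K''(1) by simp
      then show "Suc d \<le> length (s k)" by simp
      have "take (Suc d) (s k) = take d (s k) @ [s k ! d]"
        using dl by (simp add: take_Suc_conv_app_nth)
      moreover have "take d (s k) = c" using K[of k] K''(1) K'(1) k by simp
      moreover have "s k ! d = s K'' ! d" using K''(2)[OF k] .
      ultimately show "take (Suc d) (s k) = c @ [s K'' ! d]" by simp
    qed
    then show ?case by blast
  qed
  have uniq: "c = c'" if p1: "P d c" and p2: "P d c'" for d c c'
  proof -
    obtain K1 where K1: "\<forall>k\<ge>K1. take d (s k) = c" using p1 unfolding P_def by blast
    obtain K2 where K2: "\<forall>k\<ge>K2. take d (s k) = c'" using p2 unfolding P_def by blast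
    have "take d (s (K1 + K2)) = c" using K1 le_add1 by blast
    moreover have "take d (s (K1 + K2)) = c'" using K2 le_add2 by blast
    ultimately show ?thesis by simp
  qed
  define cc where "cc = (\<lambda>d. SOME c. P d c)"
  have Pcc: "P d (cc d)" for d unfolding cc_def using ex by (rule someI_ex)
  define b where "b = (\<lambda>d. cc (Suc d) ! d)"
  have mb: "map b [0..<d] = cc d" for d
  proof (induction d)
    case 0 then show ?case using Pcc[of 0] by (simp add: P_def)
  next
    case (Suc d)
    have "P d (take d (cc (Suc d)))"
    proof -
      obtain K where K: "\<forall>k\<ge>K. Suc d \<le> length (s k) \<and> take (Suc d) (s k) = cc (Suc d)"
        and l: "length (cc (Suc d)) = Suc d"
        using Pcc[of "Suc d"] unfolding P_def by blast
      show ?thesis unfolding P_def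
      proof (intro conjI exI[of _ K] allI impI)
        show "length (take d (cc (Suc d))) = d" using l by simp
        fix k assume "K \<le> k"
        then have a: "Suc d \<le> length (s k)" "take (Suc d) (s k) = cc (Suc d)" using K by auto
        show "d \<le> length (s k)" using a by simp
        have "take d (take (Suc d) (s k)) = take d (s k)" by (simp add: min_def)
        then show "take d (s k) = take d (cc (Suc d))" using a by simp
      qed
    qed
    then have t: "take d (cc (Suc d)) = cc d" using uniq Pcc by blast
    have l: "length (cc (Suc d)) = Suc d" using Pcc[of "Suc d"] by (simp add: P_def)
    have "cc (Suc d) = take d (cc (Suc d)) @ [cc (Suc d) ! d]"
      using l by (simp add: take_Suc_conv_app_nth[symmetric])
    then show ?case using Suc t by (simp add: b_def)
  qed
  show ?thesis
  proof (rule exI[of _ b], intro allI)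
    fix d
    obtain K where "\<forall>k\<ge>K. d \<le> length (s k) \<and> take d (s k) = cc d" using Pcc[of d] unfolding P_def by blast
    then show "\<exists>k. take d (s k) = map b [0..<d] \<and> d \<le> length (s k)" using mb by auto
  qed
qed


context
  fixes T :: "nat list set" and q c :: "nat \<Rightarrow> nat"
  assumes run: "is_run AA (wd T) q c"
begin

lemma tr: "\<exists>d. (q n, wd T n, d, q (Suc n)) \<in> trA \<and> int (c (Suc n)) = int (c n) + d"
  using run by (simp add: is_run_def AA_def)

lemma q0: "q 0 = 0" "c 0 = 0" using run by (simp_all add: is_run_def AA_def)

lemma D2: "wd T n = 4 \<Longrightarrow> q n \<noteq> 0 \<and> q (Suc n) = 0"
  using tr[of n] by (auto simp: trA_def)
lemma D3: "q n \<noteq> 0 \<Longrightarrow> wd T n \<noteq> 4 \<Longrightarrow> q (Suc n) \<noteq> 0"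
  using tr[of n] by (auto simp: trA_def)
lemma D4: "q n = 0 \<Longrightarrow> q (Suc n) \<noteq> 0 \<Longrightarrow> wd T n \<in> {2,3} \<and> q (Suc n) = (if wd T n = 2 then 2 else 3)"
  using tr[of n] by (auto simp: trA_def)
lemma D6: "q (Suc n) = 3 \<Longrightarrow> q n = 0 \<and> wd T n = 3"
  using tr[of n] by (auto simp: trA_def)
lemma D7: "q n \<in> {2,3} \<Longrightarrow> wd T n = 1 \<Longrightarrow> q (Suc n) = 2 \<and> c (Suc n) + 1 = c n"
  using tr[of n] by (auto simp: trA_def)
lemma D8: "\<not> (q n \<in> {2,3} \<and> wd T n = 1) \<Longrightarrow> c (Suc n) = c n + (if wd T n = 0 then 1 else 0)"
  using tr[of n] wd_range[of T n] by (auto simp: trA_def)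
lemma D10: "q n = 1 \<Longrightarrow> wd T n \<noteq> 4 \<Longrightarrow> q (Suc n) = 1"
  using tr[of n] by (auto simp: trA_def)
lemma D11: "q n \<in> {2,3} \<Longrightarrow> wd T n \<noteq> 1 \<Longrightarrow> q (Suc n) \<in> {0,1}"
  using tr[of n] by (auto simp: trA_def)

lemma c_le_acnt: "c n \<le> acnt T n"
proof (induction n)
  case 0 then show ?case by (simp add: q0 acnt_0)
next
  case (Suc n)
  show ?case
  proof (cases "q n \<in> {2,3} \<and> wd T n = 1")
    case True then show ?thesis using D7[of n] Suc acnt_Suc[of T n] by simp
  next
    case False then show ?thesis using D8[OF False] Suc acnt_Suc[of T n] by simp
  qed
qed

lemma c_nodec:
  assumes "a \<le> b" "\<And>j. a \<le> j \<Longrightarrow> j < b \<Longrightarrow> \<not> (q j \<in> {2,3} \<and> wd T j = 1)"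
  shows "c b + acnt T a = c a + acnt T b"
  using assms
proof (induction b rule: dec_induct)
  case base then show ?case by simp
next
  case (step b)
  then show ?case using D8[of b] acnt_Suc[of T b] by simp
qed

abbreviation HH where "HH k \<equiv> BB k + PP k * Zc k"

lemma BB_Suc_HH: "BB (Suc k) = Suc (HH k)" by simp

lemma q_BB: "q (BB k) = 0"
proof (cases k)
  case 0 then show ?thesis using q0 by simp
next
  case (Suc m)
  then show ?thesis using D2[of "HH m"] wd_hash[of T m] by simp
qed

lemma q_HH: "q (HH k) \<noteq> 0" using D2[of "HH k"] wd_hash[of T k] by simp

lemma wd_stage_not_hash: "BB k \<le> j \<Longrightarrow> j < HH k \<Longrightarrow> wd T j \<noteq> 4"
  using wd_not_hash[of "j - BB k" k T] by simp

lemma after_land: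
  assumes "BB k \<le> l" "q (Suc l) \<noteq> 0" "l < j" "j \<le> HH k"
  shows "q j \<noteq> 0"
proof -
  have "\<forall>t. Suc l + t \<le> HH k \<longrightarrow> q (Suc l + t) \<noteq> 0"
  proof
    fix t show "Suc l + t \<le> HH k \<longrightarrow> q (Suc l + t) \<noteq> 0"
    proof (induction t)
      case 0 then show ?case using assms(2) by simp
    next
      case (Suc t)
      show ?case
      proof
        assume a: "Suc l + Suc t \<le> HH k"
        then have "q (Suc l + t) \<noteq> 0" using Suc by simp
        moreover have "wd T (Suc l + t) \<noteq> 4" using a assms(1) by (intro wd_stage_not_hash[of k]) auto
        ultimately show "q (Suc l + Suc t) \<noteq> 0" using D3[of "Suc l + t"] by simp
      qed
    qed
  qed
  then show ?thesis using assms(3,4) by (metis Suc_le_eq le_add_diff_inverse)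
qed

definition land :: "nat \<Rightarrow> nat" where
  "land k = (SOME l. BB k \<le> l \<and> l < HH k \<and> q l = 0 \<and> q (Suc l) \<noteq> 0)"

lemma land_ex: "\<exists>l. BB k \<le> l \<and> l < HH k \<and> q l = 0 \<and> q (Suc l) \<noteq> 0"
proof -
  define m where "m = (LEAST m. BB k \<le> m \<and> q m \<noteq> 0)"
  have ex: "BB k \<le> HH k \<and> q (HH k) \<noteq> 0" using q_HH by simp
  have "BB k \<le> m \<and> q m \<noteq> 0" unfolding m_def
    by (rule LeastI[where P = "\<lambda>m. BB k \<le> m \<and> q m \<noteq> 0", OF ex])
  then have m: "BB k \<le> m" "q m \<noteq> 0" by auto
  have mH: "m \<le> HH k" unfolding m_def by (rule Least_le) (rule ex)
  have mB: "m \<noteq> BB k" using m q_BB by auto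
  then obtain l where l: "m = Suc l" using m by (cases m) auto
  have "BB k \<le> l" using m mB l by simp
  moreover have "q l = 0"
  proof (rule ccontr)
    assume "q l \<noteq> 0"
    then have "m \<le> l" unfolding m_def using \<open>BB k \<le> l\<close> by (intro Least_le) simp
    then show False using l by simp
  qed
  ultimately show ?thesis using l m mH by (intro exI[of _ l]) auto
qed

lemma land_props: "BB k \<le> land k \<and> land k < HH k \<and> q (land k) = 0 \<and> q (Suc (land k)) \<noteq> 0"
  unfolding land_def using land_ex[of k] by (rule someI_ex)

lemma land_unique:
  assumes "BB k \<le> l" "l < HH k" "q l = 0" "q (Suc l) \<noteq> 0"
  shows "l = land k"
proof (rule ccontr)
  assume ne: "l \<noteq> land k"
  have L: "BB k \<le> land k" "land k < HH k" "q (land k) = 0" "q (Suc (land k)) \<noteq> 0" using land_props by auto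
  show False
  proof (cases "l < land k")
    case True
    then show False using after_land[OF assms(1) assms(4) True] L by simp
  next
    case False
    then have "land k < l" using ne by simp
    then have "q l \<noteq> 0" using after_land[OF L(1) L(4) \<open>land k < l\<close>] assms(2) by simp
    then show False using assms(3) by simp
  qed
qed

lemma before_land: "BB k \<le> j \<Longrightarrow> j \<le> land k \<Longrightarrow> q j = 0"
proof (induction j rule: dec_induct)
  case base then show ?case by (simp add: q_BB)
next
  case (step j)
  show ?case
  proof (rule ccontr)
    assume "q (Suc j) \<noteq> 0"
    then have "j = land k"
      using step land_props[of k] by (intro land_unique) auto
    then show False using step by simp
  qed
qed

lemma land_letter: "wd T (land k) \<in> {2,3} \<and> q (Suc (land k)) = (if wd T (land k) = 2 then 2 else 3)"
  using D4[of "land k"] land_props[of k] by auto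

definition rb :: "nat \<Rightarrow> nat \<times> bool" where
  "rb k = (SOME p. fst p < PP k \<and> land k = hpos k (fst p) (snd p) \<and> cellex k (fst p) \<and>
      slotk k (cellnode k (fst p)) (snd p) \<and> cellnode k (fst p) \<in> T \<and> wd T (land k) = hl (snd p))"

lemma rb_props:
  "fst (rb k) < PP k \<and> land k = hpos k (fst (rb k)) (snd (rb k)) \<and> cellex k (fst (rb k)) \<and>
      slotk k (cellnode k (fst (rb k))) (snd (rb k)) \<and> cellnode k (fst (rb k)) \<in> T \<and> wd T (land k) = hl (snd (rb k))"
proof -
  have lb: "BB k \<le> land k" "land k < HH k" using land_props[of k] by auto
  then have o: "land k - BB k < PP k * Zc k" by linarith
  have "wd T (BB k + (land k - BB k)) \<in> {2,3}" using land_props[of k] land_letter[of k] by simp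
  then obtain r b where "r < PP k \<and> BB k + (land k - BB k) = hpos k r b \<and> cellex k r \<and> slotk k (cellnode k r) b \<and>
     cellnode k r \<in> T \<and> wd T (BB k + (land k - BB k)) = hl b"
    using wd_decode[OF o] by blast
  then have "\<exists>p. fst p < PP k \<and> land k = hpos k (fst p) (snd p) \<and> cellex k (fst p) \<and>
      slotk k (cellnode k (fst p)) (snd p) \<and> cellnode k (fst p) \<in> T \<and> wd T (land k) = hl (snd p)"
    using land_props[of k] by (intro exI[of _ "(r, b)"]) auto
  then show ?thesis unfolding rb_def by (rule someI_ex)
qed

abbreviation rr where "rr k \<equiv> fst (rb k)"
abbreviation bk where "bk k \<equiv> snd (rb k)"
abbreviation nd where "nd k \<equiv> cellnode k (rr k)"
abbreviation plk where "plk k \<equiv> plen k (nd k) (bk k)"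
abbreviation ek where "ek k \<equiv> Suc (land k) + plk k"

lemma nd_NN: "nd k \<in> NN k" "rnk k (nd k) = rr k" using cellnode_props rb_props by blast+

lemma ptr_phase: "j \<le> plk k \<Longrightarrow> q (Suc (land k) + j) \<in> {2,3} \<and> c (Suc (land k) + j) + j = c (land k)"
proof (induction j)
  case 0
  have "q (Suc (land k)) \<in> {2,3}" using land_letter[of k] by auto
  moreover have "c (Suc (land k)) = c (land k)"
    using D8[of "land k"] land_props[of k] land_letter[of k] by auto
  ultimately show ?case by simp
next
  case (Suc j)
  then have IH: "q (Suc (land k) + j) \<in> {2,3}" "c (Suc (land k) + j) + j = c (land k)" by auto
  have "wd T (hpos k (rr k) (bk k) + Suc j) = 1"
    using wd_ptr[of "rr k" k "bk k" "Suc j" T] rb_props[of k] Suc.prems by simp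
  then have w: "wd T (Suc (land k) + j) = 1" using rb_props[of k] by simp
  show ?case using D7[OF IH(1) w] IH(2) by simp
qed

lemma ek_props: "q (ek k) \<in> {2,3}" "c (ek k) + plk k = c (land k)" "ek k \<le> HH k" "wd T (ek k) \<noteq> 1"
proof -
  show "q (ek k) \<in> {2,3}" "c (ek k) + plk k = c (land k)" using ptr_phase[of "plk k" k] by auto
  show "ek k \<le> HH k"
    using ptr_end_le[of "rr k" k "nd k" "bk k"] rb_props[of k] nd_NN[of k] by simp
  show "wd T (ek k) \<noteq> 1"
    using wd_ptr_end[of "rr k" k T "bk k"] rb_props[of k] by simp
qed

lemma no_dec_between:
  assumes "ek k \<le> j" "j < land (Suc k)"
  shows "\<not> (q j \<in> {2,3} \<and> wd T j = 1)"
proof (cases "j = ek k")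
  case True then show ?thesis using ek_props by simp
next
  case False
  then have j: "ek k < j" using assms by simp
  show ?thesis
  proof (cases "j \<le> HH k")
    case True
    have all: "\<forall>t. Suc (ek k) + t \<le> HH k \<longrightarrow> q (Suc (ek k) + t) \<in> {0,1}"
    proof
      fix t show "Suc (ek k) + t \<le> HH k \<longrightarrow> q (Suc (ek k) + t) \<in> {0,1}"
      proof (induction t)
        case 0 then show ?case using D11[of "ek k"] ek_props by simp
      next
        case (Suc t)
        show ?case
        proof
          assume a: "Suc (ek k) + Suc t \<le> HH k"
          have q01: "q (Suc (ek k) + t) \<in> {0,1}" using Suc a by simp
          have "q (Suc (ek k) + t) \<noteq> 0"
            using after_land[of k "land k" "Suc (ek k) + t"] land_props[of k] a by simp
          then have "q (Suc (ek k) + t) = 1" using q01 by simp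
          moreover have "wd T (Suc (ek k) + t) \<noteq> 4"
            using a land_props[of k] by (intro wd_stage_not_hash[of k]) auto
          ultimately show "q (Suc (ek k) + Suc t) \<in> {0,1}" using D10[of "Suc (ek k) + t"] by simp
        qed
      qed
    qed
    define t where "t = j - Suc (ek k)"
    have t: "j = Suc (ek k) + t" using j unfolding t_def by linarith
    have "Suc (ek k) + t \<le> HH k" using t True by simp
    then have "q (Suc (ek k) + t) \<in> {0,1}" using all by blast
    then have "q j \<in> {0,1}" using t by simp
    then show ?thesis by auto
  next
    case False
    then have "BB (Suc k) \<le> j" by simp
    then have "q j = 0" using assms(2) by (intro before_land[of "Suc k"]) auto
    then show ?thesis by simp
  qed
qed

lemma acnt_land: "acnt T (land k) = alpha k (nd k)"
  using acnt_head[of "rr k" k T "bk k"] rb_props[of k] nd_NN[of k] by (simp add: alpha_def)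

lemma acnt_ek: "acnt T (ek k) = alpha k (nd k)"
proof -
  have "acnt T (hpos k (rr k) (bk k) + Suc (plk k)) = acnt T (hpos k (rr k) (bk k))"
    using acnt_ptr[of "rr k" k "Suc (plk k)" T "bk k"] rb_props[of k] plen_le[of k "nd k" "bk k"] by simp
  then show ?thesis using acnt_land[of k] rb_props[of k] by simp
qed

definition ww :: "nat \<Rightarrow> nat list" where "ww k = (if bk k then butlast (nd k) else nd k)"

lemma k0: "nd 0 = []" "\<not> bk 0"
  using nd_NN[of 0] rb_props[of 0] by (auto simp: NN_0 slotk_def slot2_def split: if_splits)

lemma ww_NN: "0 < k \<Longrightarrow> ww k \<in> NN (k - 1)"
  using rb_props[of k] by (auto simp: ww_def slotk_def slot1_def slot2_def split: if_splits)

lemma plk_eq: "plk k = alpha k (nd k) - (if k = 0 then 0 else alpha (k - 1) (ww k))"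
  using k0 by (cases "k = 0") (auto simp: plen_def pl1_def pl2_def ww_def)

lemma G_small: "c (ek k) < Wd k"
proof (cases "k = 0")
  case True
  have "c (land 0) \<le> alpha 0 (nd 0)" using c_le_acnt[of "land 0"] acnt_land[of 0] by simp
  then have "c (ek 0) = 0" using ek_props(2)[of 0] plk_eq[of 0] by simp
  then show ?thesis using True Wd_pos by simp
next
  case False
  then obtain m where m: "k = Suc m" by (cases k) auto
  have a1: "alpha m (ww k) \<le> Aa k" using alpha_prev_le[of m "ww k"] m by simp
  have a2: "Aa k < alpha k (nd k)" by (rule alpha_gt)
  have "c (ek k) + plk k \<le> alpha k (nd k)" using ek_props(2)[of k] c_le_acnt[of "land k"] acnt_land[of k] by simp
  then have "c (ek k) \<le> alpha m (ww k)" using plk_eq[of k] m a1 a2 by simp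
  then show ?thesis using a1 by (simp add: Wd_def)
qed

lemma step_KBle: "KBle (ww (Suc k)) (nd k)"
proof -
  define G where "G = c (ek k)"
  define X where "X = alpha (Suc k) (nd (Suc k))"
  define Y where "Y = alpha k (nd k)"
  define V where "V = alpha k (ww (Suc k))"
  have le1: "ek k \<le> land (Suc k)" using ek_props(3)[of k] land_props[of "Suc k"] by simp
  have e1: "c (land (Suc k)) + acnt T (ek k) = c (ek k) + acnt T (land (Suc k))"
    using c_nodec[OF le1] no_dec_between[of k] by blast
  have e2: "acnt T (ek k) = Y" using acnt_ek by (simp add: Y_def)
  have e3: "acnt T (land (Suc k)) = X" using acnt_land by (simp add: X_def)
  have e4: "plk (Suc k) \<le> c (land (Suc k))" using ek_props(2)[of "Suc k"] by simp
  have e5: "plk (Suc k) = X - V" using plk_eq[of "Suc k"] by (simp add: X_def V_def)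
  have VX: "V \<le> X" using alpha_prev_le[of k "ww (Suc k)"] alpha_gt[of "Suc k" "nd (Suc k)"] by (simp add: V_def X_def)
  have "Y + (X - V) \<le> G + X" using e1 e2 e3 e4 e5 by (simp add: G_def)
  then have YV: "Y < V + Wd k" using VX G_small[of k] by (simp add: G_def)
  have wN: "ww (Suc k) \<in> NN k" using ww_NN[of "Suc k"] by simp
  have "rnk k (nd k) \<le> rnk k (ww (Suc k))"
  proof (rule ccontr)
    assume "\<not> ?thesis"
    then have "Suc (rnk k (ww (Suc k))) \<le> rnk k (nd k)" by simp
    then have "Suc (Suc (rnk k (ww (Suc k)))) * Wd k \<le> Suc (rnk k (nd k)) * Wd k"
      by (intro mult_right_mono) auto
    then show False using YV by (simp add: Y_def V_def alpha_def)
  qed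
  then have "key k (ww (Suc k)) \<le> key k (nd k)" using rank_le_iff[OF nd_NN(1)[of k] wN] by simp
  then show ?thesis using key_KBle[OF wN nd_NN(1)[of k]] by simp
qed

lemma nd_step: "nd (Suc k) = ww (Suc k) \<or> (\<exists>m. nd (Suc k) = ww (Suc k) @ [m])"
proof (cases "bk (Suc k)")
  case True
  then have "nd (Suc k) \<noteq> []" using rb_props[of "Suc k"] by (simp add: slotk_def slot2_def)
  then have "nd (Suc k) = butlast (nd (Suc k)) @ [last (nd (Suc k))]" by simp
  then show ?thesis using True by (auto simp: ww_def)
next
  case False then show ?thesis by (simp add: ww_def)
qed

lemma bk_adv: "bk (Suc k) \<Longrightarrow> nd (Suc k) \<noteq> ww (Suc k)"
proof -
  assume b: "bk (Suc k)"
  then have "nd (Suc k) \<noteq> []" using rb_props[of "Suc k"] by (simp add: slotk_def slot2_def)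
  then have "0 < length (nd (Suc k))" by simp
  moreover have "length (butlast (nd (Suc k))) = length (nd (Suc k)) - 1" by simp
  ultimately have ne: "length (butlast (nd (Suc k))) \<noteq> length (nd (Suc k))" by linarith
  show ?thesis
  proof
    assume "nd (Suc k) = ww (Suc k)"
    then have "nd (Suc k) = butlast (nd (Suc k))" using b by (simp add: ww_def)
    then have "length (nd (Suc k)) = length (butlast (nd (Suc k)))" by (rule arg_cong)
    then show False using ne by simp
  qed
qed

lemma land_3: "q i = 3 \<Longrightarrow> \<exists>k. i = Suc (land k) \<and> bk k"
proof -
  assume qi: "q i = 3"
  then obtain l where l: "i = Suc l" using q0 by (cases i) auto
  then have ql: "q l = 0" "wd T l = 3" using D6[of l] qi by auto
  define k where "k = stg l"
  have kl: "BB k \<le> l" "l < BB (Suc k)" using stg_props[of l] by (auto simp: k_def)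
  have "l \<noteq> HH k" using ql wd_hash[of T k] by auto
  then have "l < HH k" using kl by simp
  then have "l = land k" using kl ql qi l by (intro land_unique) auto
  moreover have "bk k"
  proof -
    have "wd T (land k) = hl (bk k)" using rb_props[of k] by blast
    then have "hl (bk k) = 3" using ql \<open>l = land k\<close> by simp
    then show ?thesis by (simp add: hl_def split: if_splits)
  qed
  ultimately show ?thesis using l by blast
qed

lemma bk_infinite:
  assumes "infinite {i. q i \<in> final AA}"
  shows "infinite {k. nd (Suc k) \<noteq> ww (Suc k)}"
proof
  assume fin: "finite {k. nd (Suc k) \<noteq> ww (Suc k)}"
  have "{i. q i \<in> final AA} \<subseteq> (\<lambda>k. Suc (land k)) ` ({0} \<union> Suc ` {k. nd (Suc k) \<noteq> ww (Suc k)})"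
  proof
    fix i assume "i \<in> {i. q i \<in> final AA}"
    then have "q i = 3" by (simp add: AA_def)
    then obtain k where k: "i = Suc (land k)" "bk k" using land_3 by blast
    have "k \<noteq> 0"
    proof
      assume "k = 0" then show False using k(2) k0(2) by simp
    qed
    then obtain m where "k = Suc m" by (cases k) auto
    then show "i \<in> (\<lambda>k. Suc (land k)) ` ({0} \<union> Suc ` {k. nd (Suc k) \<noteq> ww (Suc k)})"
      using k bk_adv by blast
  qed
  moreover have "finite ((\<lambda>k. Suc (land k)) ` ({0} \<union> Suc ` {k. nd (Suc k) \<noteq> ww (Suc k)}))"
    using fin by simp
  ultimately have "finite {i. q i \<in> final AA}" by (rule finite_subset)
  then show False using assms by simp
qed

lemma extract_branch:
  assumes "infinite {i. q i \<in> final AA}" and pre: "\<And>v d. v \<in> T \<Longrightarrow> take d v \<in> T"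
  shows "\<exists>b. \<forall>d. map b [0..<d] \<in> T"
proof -
  obtain b where b: "\<forall>d. \<exists>k. take d (nd k) = map b [0..<d] \<and> d \<le> length (nd k)"
    using kb_limit[of "\<lambda>k. ww (Suc k)" nd] step_KBle nd_step bk_infinite[OF assms(1)] by blast
  have "map b [0..<d] \<in> T" for d
  proof -
    obtain k where "take d (nd k) = map b [0..<d]" using b by blast
    moreover have "nd k \<in> T" using rb_props[of k] by simp
    ultimately show ?thesis using pre[of "nd k" d] by simp
  qed
  then show ?thesis by blast
qed

end


definition Ty :: "((nat \<Rightarrow> nat) \<times> (nat \<Rightarrow> nat)) set \<Rightarrow> (nat \<Rightarrow> nat) \<Rightarrow> nat list set" where
  "Ty C y = {v. \<exists>y' z'. (y', z') \<in> C \<and> agree (length v) y' y \<and> map z' [0..<length v] = v}"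

lemma Ty_take: "v \<in> Ty C y \<Longrightarrow> take d v \<in> Ty C y"
proof -
  assume "v \<in> Ty C y"
  then obtain y' z' where yz: "(y', z') \<in> C" "agree (length v) y' y" "map z' [0..<length v] = v"
    by (auto simp: Ty_def)
  have "agree (length (take d v)) y' y" using yz(2) by (auto simp: agree_def)
  moreover have "map z' [0..<length (take d v)] = take d v"
  proof -
    have "take d v = take d (map z' [0..<length v])" using yz(3) by simp
    also have "\<dots> = map z' (take d [0..<length v])" by (rule take_map)
    also have "\<dots> = map z' [0..<min d (length v)]" by (simp add: take_upt min_def)
    finally show ?thesis by (simp add: min.commute)
  qed
  ultimately show ?thesis using yz(1) by (auto simp: Ty_def)
qed

lemma Ty_cong: "agree K y1 y2 \<Longrightarrow> length v \<le> K \<Longrightarrow> v \<in> Ty C y1 \<longleftrightarrow> v \<in> Ty C y2"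
  unfolding Ty_def agree_def by auto

lemma cl_cong:
  assumes "cellex k r \<Longrightarrow> (cellnode k r \<in> T \<longleftrightarrow> cellnode k r \<in> T')"
  shows "cl T k r qv = cl T' k r qv"
  using assms by (auto simp: cl_def)

lemma wd_cong:
  assumes "\<And>v. length v \<le> stg n \<Longrightarrow> v \<in> T \<longleftrightarrow> v \<in> T'"
  shows "wd T n = wd T' n"
proof -
  let ?k = "stg n"
  have "cl T ?k r qv = cl T' ?k r qv" for r qv
  proof (rule cl_cong)
    assume "cellex ?k r"
    then have "cellnode ?k r \<in> NN ?k" using cellnode_props by blast
    then show "cellnode ?k r \<in> T \<longleftrightarrow> cellnode ?k r \<in> T'" using assms by (simp add: NN_def)
  qed
  then show ?thesis by (simp add: wd_def sl_def)
qed

lemma reduction: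
  assumes C: "closedin (B2 Y) C"
  shows "continuous_map (dprod Y) (dprod (alph AA)) (\<lambda>y. wd (Ty C y))"
    and "fst ` C = {y \<in> topspace (dprod Y). wd (Ty C y) \<in> omega_lang AA}"
proof -
  show "continuous_map (dprod Y) (dprod (alph AA)) (\<lambda>y. wd (Ty C y))"
  proof (rule continuous_map_dprodI)
    fix y n show "wd (Ty C y) n \<in> alph AA" using wd_range by (simp add: AA_def)
  next
    fix y n
    show "\<exists>m. \<forall>x'\<in>topspace (dprod Y). agree m x' y \<longrightarrow> wd (Ty C x') n = wd (Ty C y) n"
    proof (intro exI[of _ "stg n"] ballI impI)
      fix x' assume "agree (stg n) x' y"
      then show "wd (Ty C x') n = wd (Ty C y) n"
        by (intro wd_cong) (simp add: Ty_cong)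
    qed
  qed
  have Csub: "C \<subseteq> topspace (dprod Y) \<times> UNIV" using C unfolding closedin_B2_iff by blast
  show "fst ` C = {y \<in> topspace (dprod Y). wd (Ty C y) \<in> omega_lang AA}"
  proof
    show "fst ` C \<subseteq> {y \<in> topspace (dprod Y). wd (Ty C y) \<in> omega_lang AA}"
    proof
      fix y assume "y \<in> fst ` C"
      then obtain z where yz: "(y, z) \<in> C" by force
      have "map z [0..<d] \<in> Ty C y" for d using yz by (auto simp: Ty_def agree_def)
      then have "wd (Ty C y) \<in> omega_lang AA" by (rule honest_accepts)
      then show "y \<in> {y \<in> topspace (dprod Y). wd (Ty C y) \<in> omega_lang AA}" using yz Csub by auto
    qed
    show "{y \<in> topspace (dprod Y). wd (Ty C y) \<in> omega_lang AA} \<subseteq> fst ` C"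
    proof
      fix y assume y: "y \<in> {y \<in> topspace (dprod Y). wd (Ty C y) \<in> omega_lang AA}"
      then obtain q c where run: "is_run AA (wd (Ty C y)) q c" and inf: "infinite {i. q i \<in> final AA}"
        by (auto simp: omega_lang_def)
      obtain b where b: "\<And>d. map b [0..<d] \<in> Ty C y"
        using extract_branch[OF run inf Ty_take] by blast
      have "\<forall>n. \<exists>y' z'. (y', z') \<in> C \<and> agree n y' y \<and> agree n z' b"
      proof
        fix n
        obtain y' z' where "(y', z') \<in> C" "agree n y' y" "map z' [0..<n] = map b [0..<n]"
          using b[of n] by (auto simp: Ty_def)
        then show "\<exists>y' z'. (y', z') \<in> C \<and> agree n y' y \<and> agree n z' b"
          by (auto simp: agree_map)
      qed
      moreover have "y \<in> topspace (dprod Y)" using y by simp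
      moreover have "\<forall>y z. y \<in> topspace (dprod Y) \<longrightarrow>
       (\<forall>n. \<exists>y' z'. (y', z') \<in> C \<and> agree n y' y \<and> agree n z' z) \<longrightarrow> (y, z) \<in> C"
        using C unfolding closedin_B2_iff by (rule conjunct2)
      ultimately have "(y, b) \<in> C" by blast
      then show "y \<in> fst ` C" by force
    qed
  qed
qed

lemma AA_complete: "sigma11_complete (alph AA) (omega_lang AA)"
  unfolding sigma11_complete_def
proof (intro conjI allI impI)
  show "omega_lang AA \<subseteq> topspace (cantor_top (alph AA))"
    by (auto simp: omega_lang_def cantor_dprod)
  fix Y E assume fin: "finite Y" and E: "E \<subseteq> topspace (cantor_top Y)"
  show "analytic_set Y E \<longleftrightarrow>
        (\<exists>f. continuous_map (cantor_top Y) (cantor_top (alph AA)) f \<and>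
             E = {y \<in> topspace (cantor_top Y). f y \<in> omega_lang AA})"
  proof
    assume "analytic_set Y E"
    then obtain C where C: "closedin (B2 Y) C" "E = fst ` C" unfolding analytic_set_iff by blast
    show "\<exists>f. continuous_map (cantor_top Y) (cantor_top (alph AA)) f \<and>
             E = {y \<in> topspace (cantor_top Y). f y \<in> omega_lang AA}"
      using reduction[OF C(1)] C(2) unfolding cantor_dprod by blast
  next
    assume "\<exists>f. continuous_map (cantor_top Y) (cantor_top (alph AA)) f \<and>
             E = {y \<in> topspace (cantor_top Y). f y \<in> omega_lang AA}"
    then obtain f where f: "continuous_map (dprod Y) (dprod (alph AA)) f"
      "E = {y \<in> topspace (dprod Y). f y \<in> omega_lang AA}" unfolding cantor_dprod by blast
    show "analytic_set Y E" using analytic_preimage[OF f(1) omega_lang_analytic] f(2) by simp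
  qed
qed

theorem mainTheorem10:
  shows "\<exists>A. wf_bcba A \<and> sigma11_complete (alph A) (omega_lang A) \<and>
             \<not> borel_in (cantor_top (alph A)) (omega_lang A)"
  using wf_AA AA_complete complete_not_borel by blast


end
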